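(* Let $(A,\mathfrak m)$ be a local Noetherian normal integral domain, and let $I_1,I_2,\dots$ be nonzero prime ideals of $A$ with $\lim_{n\to\infty}I_n=0$ in the $\mathfrak m$-adic topology. Set $P=\prod_n A/I_n$ and $S=\bigoplus_n A/I_n\subseteq P$. If $M$ is a finitely generated $A$-module with $\operatorname{Hom}_A(M,A/I_n)\cong A/I_n$ for all $n$, then $\operatorname{Hom}_A(M,P/S)\cong P/S$.
   Context: $\lim_{n\to\infty}I_n=0$ in the $\mathfrak m$-adic topology means: for every $i\ge1$ there is $n_i$ such that $I_n\subseteq\mathfrak m^i$ for all $n\ge n_i$. *)

theory Defs
  imports "HOL-Algebra.Algebra"
begin

definition local_ring_with :: "('a, 'b) ring_scheme \<Rightarrow> 'a set \<Rightarrow> bool" where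
  "local_ring_with A m \<longleftrightarrow> maximalideal m A \<and> (\<forall>J. maximalideal J A \<longrightarrow> J = m)"

text \<open>An element a/b
 (b nonzero) of the fraction field is integral over A iff there are n \<ge> 1 and
 c_0,...,c_(n-1) in A with (a/b)^n + sum c_i (a/b)^i = 0, i.e. after clearing
 denominators a^n + sum_(i<n) c_i a^i b^(n-i) = 0; it lies in A iff b divides a.\<close>
definition normal_domain :: "('a, 'b) ring_scheme \<Rightarrow> bool" where
  "normal_domain A \<longleftrightarrow> domain A \<and>
     (\<forall>a\<in>carrier A. \<forall>b\<in>carrier A. b \<noteq> \<zero>\<^bsub>A\<^esub> \<longrightarrow>
        (\<exists>n::nat. n \<ge> 1 \<and> (\<exists>c. c \<in> {..<n} \<rightarrow> carrier A \<and>
            a [^]\<^bsub>A\<^esub> n \<oplus>\<^bsub>A\<^esub>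
              (\<Oplus>\<^bsub>A\<^esub>i\<in>{..<n}. c i \<otimes>\<^bsub>A\<^esub> a [^]\<^bsub>A\<^esub> i \<otimes>\<^bsub>A\<^esub> b [^]\<^bsub>A\<^esub> (n - i))
            = \<zero>\<^bsub>A\<^esub>))
        \<longrightarrow> (\<exists>x\<in>carrier A. a = b \<otimes>\<^bsub>A\<^esub> x))"

definition ideal_pow :: "('a, 'b) ring_scheme \<Rightarrow> 'a set \<Rightarrow> nat \<Rightarrow> 'a set" where
  "ideal_pow A m i = m [^]\<^bsub>ideals_set A\<^esub> i"

definition fin_gen_module :: "('a, 'c) ring_scheme \<Rightarrow> ('a, 'm) module \<Rightarrow> bool" where
  "fin_gen_module A M \<longleftrightarrow> (\<exists>G. finite G \<and> G \<subseteq> carrier M \<and>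
      carrier M = \<Inter>{H. submodule H A M \<and> G \<subseteq> H})"

definition self_module :: "('a, 'c) ring_scheme \<Rightarrow> ('a, 'a) module" where
  "self_module A = \<lparr>carrier = carrier A, monoid.mult = monoid.mult A, one = monoid.one A, ring.zero = ring.zero A,
     ring.add = add A, smult = monoid.mult A\<rparr>"

definition quot_module :: "('a, 'c) ring_scheme \<Rightarrow> ('a, 'm) module \<Rightarrow> 'm set \<Rightarrow> ('a, 'm set) module" where
  "quot_module A M N = \<lparr>carrier = a_rcosets\<^bsub>M\<^esub> N,
     monoid.mult = set_add M, one = N, ring.zero = N,
     ring.add = set_add M,
     smult = (\<lambda>a Y. set_add M N ((\<lambda>x. a \<odot>\<^bsub>M\<^esub> x) ` Y))\<rparr>"

definition prod_module :: "('a, 'c) ring_scheme \<Rightarrow> (nat \<Rightarrow> ('a, 'm) module) \<Rightarrow> ('a, nat \<Rightarrow> 'm) module" where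
  "prod_module A Ms = \<lparr>carrier = {f. \<forall>n. f n \<in> carrier (Ms n)},
     monoid.mult = (\<lambda>f g n. f n \<oplus>\<^bsub>Ms n\<^esub> g n), one = (\<lambda>n. \<zero>\<^bsub>Ms n\<^esub>), ring.zero = (\<lambda>n. \<zero>\<^bsub>Ms n\<^esub>),
     ring.add = (\<lambda>f g n. f n \<oplus>\<^bsub>Ms n\<^esub> g n),
     smult = (\<lambda>a f n. a \<odot>\<^bsub>Ms n\<^esub> f n)\<rparr>"

definition dsum_set :: "(nat \<Rightarrow> ('a, 'm) module) \<Rightarrow> (nat \<Rightarrow> 'm) set" where
  "dsum_set Ms = {f. (\<forall>n. f n \<in> carrier (Ms n)) \<and> finite {n. f n \<noteq> \<zero>\<^bsub>Ms n\<^esub>}}"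

definition mod_hom :: "('a, 'c) ring_scheme \<Rightarrow> ('a, 'm) module \<Rightarrow> ('a, 'n) module \<Rightarrow> ('m \<Rightarrow> 'n) set" where
  "mod_hom A M N = {f. f \<in> carrier M \<rightarrow> carrier N \<and> f \<in> extensional (carrier M) \<and>
     (\<forall>x\<in>carrier M. \<forall>y\<in>carrier M. f (x \<oplus>\<^bsub>M\<^esub> y) = f x \<oplus>\<^bsub>N\<^esub> f y) \<and>
     (\<forall>a\<in>carrier A. \<forall>x\<in>carrier M. f (a \<odot>\<^bsub>M\<^esub> x) = a \<odot>\<^bsub>N\<^esub> f x)}"

text \<open>The A-module Hom_A(M,N) with pointwise operations
  (the multiplicative fields of the record are irrelevant).\<close>
definition Hom_module :: "('a, 'c) ring_scheme \<Rightarrow> ('a, 'm) module \<Rightarrow> ('a, 'n) module \<Rightarrow> ('a, 'm \<Rightarrow> 'n) module" where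
  "Hom_module A M N = \<lparr>carrier = mod_hom A M N,
     monoid.mult = (\<lambda>f g. \<lambda>x\<in>carrier M. f x \<oplus>\<^bsub>N\<^esub> g x),
     one = (\<lambda>x\<in>carrier M. \<zero>\<^bsub>N\<^esub>), ring.zero = (\<lambda>x\<in>carrier M. \<zero>\<^bsub>N\<^esub>),
     ring.add = (\<lambda>f g. \<lambda>x\<in>carrier M. f x \<oplus>\<^bsub>N\<^esub> g x),
     smult = (\<lambda>a f. \<lambda>x\<in>carrier M. a \<odot>\<^bsub>N\<^esub> f x)\<rparr>"

definition mod_isomorphic :: "('a, 'c) ring_scheme \<Rightarrow> ('a, 'm) module \<Rightarrow> ('a, 'n) module \<Rightarrow> bool" where
  "mod_isomorphic A M N \<longleftrightarrow> (\<exists>f \<in> mod_hom A M N. bij_betw f (carrier M) (carrier N))"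

end

theory Submission
  imports Defs
begin


lemma quot_module_simps:
  "carrier (quot_module A M N) = a_rcosets\<^bsub>M\<^esub> N"
  "\<zero>\<^bsub>quot_module A M N\<^esub> = N"
  "U \<oplus>\<^bsub>quot_module A M N\<^esub> V = set_add M U V"
  "a \<odot>\<^bsub>quot_module A M N\<^esub> V = set_add M N ((\<lambda>x. a \<odot>\<^bsub>M\<^esub> x) ` V)"
  by (simp_all add: quot_module_def)

lemma comm_group_cong:
  assumes G: "comm_group G" and c: "carrier H = carrier G" and m: "\<And>x y. x \<otimes>\<^bsub>H\<^esub> y = x \<otimes>\<^bsub>G\<^esub> y"
    and o: "\<one>\<^bsub>H\<^esub> = \<one>\<^bsub>G\<^esub>"
  shows "comm_group H"
proof -
  interpret G: comm_group G by (rule G)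
  show ?thesis
    by (rule comm_groupI) (auto simp: c m o G.m_assoc G.m_comm G.m_lcomm intro: G.l_inv_ex)
qed

lemma add_monoid_quot: "comm_group (M A_Mod N) \<Longrightarrow> comm_group (add_monoid (quot_module A M N))"
  by (rule comm_group_cong[where G="M A_Mod N"]) (simp_all add: quot_module_def A_FactGroup_def')

context
  fixes R :: "('a,'c) ring_scheme" and M :: "('a,'m) module"
  assumes mod: "module R M"
begin
interpretation module R M by (rule mod)

lemma sub_abelian: "submodule N R M \<Longrightarrow> abelian_subgroup N M"
  by (rule abelian_subgroupI3) (auto intro: additive_subgroup.intro submodule.axioms(1) module.axioms(2)[OF mod])

lemma quot_add:
  assumes "submodule N R M" "x \<in> carrier M" "y \<in> carrier M"
  shows "(N +>\<^bsub>M\<^esub> x) \<oplus>\<^bsub>quot_module R M N\<^esub> (N +>\<^bsub>M\<^esub> y) = N +>\<^bsub>M\<^esub> (x \<oplus>\<^bsub>M\<^esub> y)"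
  using abelian_subgroup.a_rcos_sum[OF sub_abelian[OF assms(1)]] assms
  by (simp add: quot_module_simps)

lemma quot_smult:
  assumes N: "submodule N R M" and a: "a \<in> carrier R" and x: "x \<in> carrier M"
  shows "a \<odot>\<^bsub>quot_module R M N\<^esub> (N +>\<^bsub>M\<^esub> x) = N +>\<^bsub>M\<^esub> (a \<odot>\<^bsub>M\<^esub> x)"
proof -
  have NM: "N \<subseteq> carrier M" using N submoduleE(1) by blast
  have z: "\<zero>\<^bsub>M\<^esub> \<in> N" using N by (meson submodule.axioms(1) additive_subgroup.zero_closed additive_subgroup.intro)
  show ?thesis
    unfolding quot_module_simps
  proof (rule equalityI; rule subsetI)
    fix z assume "z \<in> set_add M N ((\<lambda>x. a \<odot>\<^bsub>M\<^esub> x) ` (N +>\<^bsub>M\<^esub> x))"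
    then obtain n n' where nn: "n \<in> N" "n' \<in> N" "z = n \<oplus>\<^bsub>M\<^esub> a \<odot>\<^bsub>M\<^esub> (n' \<oplus>\<^bsub>M\<^esub> x)"
      by (auto simp: set_add_def' a_r_coset_def')
    have "z = (n \<oplus>\<^bsub>M\<^esub> a \<odot>\<^bsub>M\<^esub> n') \<oplus>\<^bsub>M\<^esub> a \<odot>\<^bsub>M\<^esub> x"
      proof -
      have c: "n \<in> carrier M" "n' \<in> carrier M" using nn NM by auto
      have cc: "a \<odot>\<^bsub>M\<^esub> n' \<in> carrier M" "a \<odot>\<^bsub>M\<^esub> x \<in> carrier M" using c a x smult_closed by blast+
      show ?thesis unfolding nn(3) smult_r_distr[OF a c(2) x] M.a_assoc[OF c(1) cc, symmetric] ..
    qed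
    moreover have "n \<oplus>\<^bsub>M\<^esub> a \<odot>\<^bsub>M\<^esub> n' \<in> N" using nn(1,2) submoduleE(4,5)[OF N] a by blast
    ultimately show "z \<in> N +>\<^bsub>M\<^esub> (a \<odot>\<^bsub>M\<^esub> x)" unfolding a_r_coset_def' by blast
  next
    fix z assume "z \<in> N +>\<^bsub>M\<^esub> (a \<odot>\<^bsub>M\<^esub> x)"
    then obtain n where n: "n \<in> N" "z = n \<oplus>\<^bsub>M\<^esub> a \<odot>\<^bsub>M\<^esub> x" by (auto simp: a_r_coset_def')
    have "x \<in> N +>\<^bsub>M\<^esub> x" using z x by (auto simp: a_r_coset_def' intro!: bexI[of _ "\<zero>\<^bsub>M\<^esub>"])
    then show "z \<in> set_add M N ((\<lambda>x. a \<odot>\<^bsub>M\<^esub> x) ` (N +>\<^bsub>M\<^esub> x))"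
      using n by (auto simp: set_add_def')
  qed
qed

lemma quot_eq:
  assumes "submodule N R M" "x \<in> carrier M" "y \<in> carrier M"
  shows "(N +>\<^bsub>M\<^esub> x = N +>\<^bsub>M\<^esub> y) \<longleftrightarrow> x \<oplus>\<^bsub>M\<^esub> \<ominus>\<^bsub>M\<^esub> y \<in> N"
  using assms abelian_subgroup.a_rcos_module[OF sub_abelian[OF assms(1)]]
    abelian_subgroup.a_repr_independence'[OF sub_abelian[OF assms(1)]]
    abelian_subgroup.a_repr_independenceD[OF sub_abelian[OF assms(1)]]
  by metis

lemma quot_carrier:
  "carrier (quot_module R M N) = {N +>\<^bsub>M\<^esub> x | x. x \<in> carrier M}"
  by (auto simp: quot_module_simps A_RCOSETS_def')

lemma quot_is_module:
  assumes N: "submodule N R M"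
  shows "module R (quot_module R M N)"
proof (rule moduleI)
  show "cring R" by (rule R.is_cring)
  show "abelian_group (quot_module R M N)"
    using abelian_subgroup.a_factorgroup_is_comm_group[OF sub_abelian[OF N]]
    by (metis add_monoid_quot comm_group_abelian_groupI)
  fix a b U V
  assume a: "a \<in> carrier R"
  assume U: "U \<in> carrier (quot_module R M N)"
  then obtain x where x: "x \<in> carrier M" and Ux: "U = N +>\<^bsub>M\<^esub> x" by (auto simp: quot_carrier)
  show "a \<odot>\<^bsub>quot_module R M N\<^esub> U \<in> carrier (quot_module R M N)"
    using a x unfolding Ux quot_smult[OF N a x] quot_carrier by blast
  show "b \<in> carrier R \<Longrightarrow>
     (a \<oplus>\<^bsub>R\<^esub> b) \<odot>\<^bsub>quot_module R M N\<^esub> U = a \<odot>\<^bsub>quot_module R M N\<^esub> U \<oplus>\<^bsub>quot_module R M N\<^esub> b \<odot>\<^bsub>quot_module R M N\<^esub> U"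
  proof -
    assume b: "b \<in> carrier R"
    have ab: "a \<oplus>\<^bsub>R\<^esub> b \<in> carrier R" using a b by simp
    show ?thesis unfolding Ux quot_smult[OF N ab x] quot_smult[OF N a x] quot_smult[OF N b x]
      quot_add[OF N smult_closed[OF a x] smult_closed[OF b x]] smult_l_distr[OF a b x] ..
  qed
  show "V \<in> carrier (quot_module R M N) \<Longrightarrow>
     a \<odot>\<^bsub>quot_module R M N\<^esub> (U \<oplus>\<^bsub>quot_module R M N\<^esub> V) = a \<odot>\<^bsub>quot_module R M N\<^esub> U \<oplus>\<^bsub>quot_module R M N\<^esub> a \<odot>\<^bsub>quot_module R M N\<^esub> V"
  proof -
    assume "V \<in> carrier (quot_module R M N)"
    then obtain y where y: "y \<in> carrier M" and Vy: "V = N +>\<^bsub>M\<^esub> y" by (auto simp: quot_carrier)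
    have xy: "x \<oplus>\<^bsub>M\<^esub> y \<in> carrier M" using x y by simp
    show ?thesis unfolding Ux Vy quot_add[OF N x y] quot_smult[OF N a xy] quot_smult[OF N a x] quot_smult[OF N a y]
      quot_add[OF N smult_closed[OF a x] smult_closed[OF a y]] smult_r_distr[OF a x y] ..
  qed
  show "b \<in> carrier R \<Longrightarrow>
     (a \<otimes>\<^bsub>R\<^esub> b) \<odot>\<^bsub>quot_module R M N\<^esub> U = a \<odot>\<^bsub>quot_module R M N\<^esub> (b \<odot>\<^bsub>quot_module R M N\<^esub> U)"
  proof -
    assume b: "b \<in> carrier R"
    have ab: "a \<otimes>\<^bsub>R\<^esub> b \<in> carrier R" using a b by simp
    show ?thesis unfolding Ux quot_smult[OF N ab x] quot_smult[OF N b x] quot_smult[OF N a smult_closed[OF b x]]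
      smult_assoc1[OF a b x] ..
  qed
next
  fix U assume "U \<in> carrier (quot_module R M N)"
  then obtain x where x: "x \<in> carrier M" and Ux: "U = N +>\<^bsub>M\<^esub> x" by (auto simp: quot_carrier)
  show "\<one>\<^bsub>R\<^esub> \<odot>\<^bsub>quot_module R M N\<^esub> U = U"
    unfolding Ux quot_smult[OF N R.one_closed x] smult_one[OF x] ..
qed

end


lemma ag_minus_zero:
  assumes G: "abelian_group G"
  shows "\<ominus>\<^bsub>G\<^esub> \<zero>\<^bsub>G\<^esub> = \<zero>\<^bsub>G\<^esub>"
proof -
  interpret abelian_group G by (rule G)
  show ?thesis by (rule minus_equality) simp_all
qed

lemma ag_inv_zero:
  assumes G: "abelian_group G" and x: "x \<in> carrier G" and e: "\<ominus>\<^bsub>G\<^esub> x = \<zero>\<^bsub>G\<^esub>"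
  shows "x = \<zero>\<^bsub>G\<^esub>"
proof -
  interpret abelian_group G by (rule G)
  have "x = \<ominus>\<^bsub>G\<^esub> (\<ominus>\<^bsub>G\<^esub> x)" using x by (simp add: minus_minus)
  also have "\<dots> = \<ominus>\<^bsub>G\<^esub> \<zero>\<^bsub>G\<^esub>" using e by simp
  also have "\<dots> = \<zero>\<^bsub>G\<^esub>" by (rule minus_equality) simp_all
  finally show ?thesis .
qed

lemma prod_module_simps:
  "carrier (prod_module A Ms) = {f. \<forall>n. f n \<in> carrier (Ms n)}"
  "\<zero>\<^bsub>prod_module A Ms\<^esub> = (\<lambda>n. \<zero>\<^bsub>Ms n\<^esub>)"
  "f \<oplus>\<^bsub>prod_module A Ms\<^esub> g = (\<lambda>n. f n \<oplus>\<^bsub>Ms n\<^esub> g n)"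
  "a \<odot>\<^bsub>prod_module A Ms\<^esub> f = (\<lambda>n. a \<odot>\<^bsub>Ms n\<^esub> f n)"
  by (simp_all add: prod_module_def)

lemma prod_abelian:
  assumes mods: "\<And>n. module A (Ms n)"
  shows "abelian_group (prod_module A Ms)"
proof -
  have ag: "\<And>n. abelian_group (Ms n)" using mods module.axioms(2) by blast
  have am: "\<And>n. abelian_monoid (Ms n)" using ag abelian_group.axioms(1) by blast
  have "comm_group (add_monoid (prod_module A Ms))"
  proof (rule comm_groupI)
    fix x y z
    assume x: "x \<in> carrier (add_monoid (prod_module A Ms))"
       and y: "y \<in> carrier (add_monoid (prod_module A Ms))"
       and z: "z \<in> carrier (add_monoid (prod_module A Ms))"
    show "x \<otimes>\<^bsub>add_monoid (prod_module A Ms)\<^esub> y \<in> carrier (add_monoid (prod_module A Ms))"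
      using x y am by (simp add: prod_module_def abelian_monoid.a_closed)
    show "x \<otimes>\<^bsub>add_monoid (prod_module A Ms)\<^esub> y \<otimes>\<^bsub>add_monoid (prod_module A Ms)\<^esub> z =
          x \<otimes>\<^bsub>add_monoid (prod_module A Ms)\<^esub> (y \<otimes>\<^bsub>add_monoid (prod_module A Ms)\<^esub> z)"
      using x y z am by (simp add: prod_module_def abelian_monoid.a_assoc)
    show "x \<otimes>\<^bsub>add_monoid (prod_module A Ms)\<^esub> y = y \<otimes>\<^bsub>add_monoid (prod_module A Ms)\<^esub> x"
      using x y am by (simp add: prod_module_def abelian_monoid.a_comm)
    show "\<one>\<^bsub>add_monoid (prod_module A Ms)\<^esub> \<otimes>\<^bsub>add_monoid (prod_module A Ms)\<^esub> x = x"
      using x am by (simp add: prod_module_def abelian_monoid.l_zero)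
    show "\<exists>y\<in>carrier (add_monoid (prod_module A Ms)). y \<otimes>\<^bsub>add_monoid (prod_module A Ms)\<^esub> x = \<one>\<^bsub>add_monoid (prod_module A Ms)\<^esub>"
      using x ag by (intro bexI[of _ "\<lambda>n. \<ominus>\<^bsub>Ms n\<^esub> x n"]) (simp_all add: prod_module_def abelian_group.l_neg abelian_group.a_inv_closed)
  next
    show "\<one>\<^bsub>add_monoid (prod_module A Ms)\<^esub> \<in> carrier (add_monoid (prod_module A Ms))"
      using am by (simp add: prod_module_def abelian_monoid.zero_closed)
  qed
  then show ?thesis by (rule comm_group_abelian_groupI)
qed

lemma prod_is_module:
  assumes mods: "\<And>n. module A (Ms n)" and cr: "cring A"
  shows "module A (prod_module A Ms)"
  by (rule moduleI[OF cr prod_abelian[OF mods]])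
     (auto simp: prod_module_simps module.smult_l_distr[OF mods]
        module.smult_r_distr[OF mods] module.smult_assoc1[OF mods] module.smult_one[OF mods] intro: module.smult_closed[OF mods])

lemma prod_inv:
  assumes mods: "\<And>n. module A (Ms n)" and f: "f \<in> carrier (prod_module A Ms)"
  shows "\<ominus>\<^bsub>prod_module A Ms\<^esub> f = (\<lambda>n. \<ominus>\<^bsub>Ms n\<^esub> f n)"
proof -
  have ag: "\<And>n. abelian_group (Ms n)" using mods module.axioms(2) by blast
  interpret P: abelian_group "prod_module A Ms" by (rule prod_abelian[OF mods])
  have fn: "\<And>n. f n \<in> carrier (Ms n)" using f by (simp add: prod_module_simps)
  have c: "(\<lambda>n. \<ominus>\<^bsub>Ms n\<^esub> f n) \<in> carrier (prod_module A Ms)"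
    using abelian_group.a_inv_closed[OF ag fn] by (simp add: prod_module_simps)
  have e: "(\<lambda>n. \<ominus>\<^bsub>Ms n\<^esub> f n) \<oplus>\<^bsub>prod_module A Ms\<^esub> f = \<zero>\<^bsub>prod_module A Ms\<^esub>"
    using abelian_group.l_neg[OF ag fn] by (simp add: prod_module_simps)
  show ?thesis using P.minus_equality[OF e f c] .
qed

lemma dsum_submodule:
  assumes mods: "\<And>n. module A (Ms n)" and cr: "cring A"
  shows "submodule (dsum_set Ms) A (prod_module A Ms)"
proof -
  interpret P: module A "prod_module A Ms" by (rule prod_is_module[OF mods cr])
  have ag: "\<And>n. abelian_group (Ms n)" using mods module.axioms(2) by blast
  have am: "\<And>n. abelian_monoid (Ms n)" using ag abelian_group.axioms(1) by blast
  show ?thesis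
  proof (rule P.submoduleI)
    show "dsum_set Ms \<subseteq> carrier (prod_module A Ms)"
      unfolding dsum_set_def prod_module_simps by blast
    have "\<And>n. \<zero>\<^bsub>Ms n\<^esub> \<in> carrier (Ms n)" using abelian_monoid.zero_closed[OF am] .
    then show "\<zero>\<^bsub>prod_module A Ms\<^esub> \<in> dsum_set Ms"
      unfolding dsum_set_def prod_module_simps by simp
  next
    fix f assume f: "f \<in> dsum_set Ms"
    then have fc: "f \<in> carrier (prod_module A Ms)" unfolding dsum_set_def prod_module_simps by blast
    have fn: "\<And>n. f n \<in> carrier (Ms n)" using f unfolding dsum_set_def by blast
    have sub: "{n. \<ominus>\<^bsub>Ms n\<^esub> f n \<noteq> \<zero>\<^bsub>Ms n\<^esub>} \<subseteq> {n. f n \<noteq> \<zero>\<^bsub>Ms n\<^esub>}"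
    proof (rule subsetI)
      fix n assume "n \<in> {n. \<ominus>\<^bsub>Ms n\<^esub> f n \<noteq> \<zero>\<^bsub>Ms n\<^esub>}"
      then show "n \<in> {n. f n \<noteq> \<zero>\<^bsub>Ms n\<^esub>}" using ag_minus_zero[OF ag, of n] by force
    qed
    have fin: "finite {n. f n \<noteq> \<zero>\<^bsub>Ms n\<^esub>}" using f unfolding dsum_set_def by blast
    show "\<ominus>\<^bsub>prod_module A Ms\<^esub> f \<in> dsum_set Ms"
      unfolding prod_inv[OF mods fc] dsum_set_def
      using abelian_group.a_inv_closed[OF ag fn] finite_subset[OF sub fin] by simp
  next
    fix f g assume f: "f \<in> dsum_set Ms" and g: "g \<in> dsum_set Ms"
    have fn: "\<And>n. f n \<in> carrier (Ms n)" using f unfolding dsum_set_def by blast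
    have gn: "\<And>n. g n \<in> carrier (Ms n)" using g unfolding dsum_set_def by blast
    have sub: "{n. f n \<oplus>\<^bsub>Ms n\<^esub> g n \<noteq> \<zero>\<^bsub>Ms n\<^esub>} \<subseteq> {n. f n \<noteq> \<zero>\<^bsub>Ms n\<^esub>} \<union> {n. g n \<noteq> \<zero>\<^bsub>Ms n\<^esub>}"
    proof
      fix n assume "n \<in> {n. f n \<oplus>\<^bsub>Ms n\<^esub> g n \<noteq> \<zero>\<^bsub>Ms n\<^esub>}"
      then show "n \<in> {n. f n \<noteq> \<zero>\<^bsub>Ms n\<^esub>} \<union> {n. g n \<noteq> \<zero>\<^bsub>Ms n\<^esub>}"
        using abelian_monoid.l_zero[OF am gn] by (cases "f n = \<zero>\<^bsub>Ms n\<^esub>") auto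
    qed
    have fin: "finite {n. f n \<noteq> \<zero>\<^bsub>Ms n\<^esub>}" "finite {n. g n \<noteq> \<zero>\<^bsub>Ms n\<^esub>}"
      using f g unfolding dsum_set_def by blast+
    show "f \<oplus>\<^bsub>prod_module A Ms\<^esub> g \<in> dsum_set Ms"
      unfolding prod_module_simps dsum_set_def
      using abelian_monoid.a_closed[OF am fn gn] finite_subset[OF sub] fin by simp
  next
    fix a f assume a: "a \<in> carrier A" and f: "f \<in> dsum_set Ms"
    have fn: "\<And>n. f n \<in> carrier (Ms n)" using f unfolding dsum_set_def by blast
    have sub: "{n. a \<odot>\<^bsub>Ms n\<^esub> f n \<noteq> \<zero>\<^bsub>Ms n\<^esub>} \<subseteq> {n. f n \<noteq> \<zero>\<^bsub>Ms n\<^esub>}"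
    proof (rule subsetI)
      fix n assume "n \<in> {n. a \<odot>\<^bsub>Ms n\<^esub> f n \<noteq> \<zero>\<^bsub>Ms n\<^esub>}"
      then show "n \<in> {n. f n \<noteq> \<zero>\<^bsub>Ms n\<^esub>}" using module.smult_r_null[OF mods a, of n] by force
    qed
    have fin: "finite {n. f n \<noteq> \<zero>\<^bsub>Ms n\<^esub>}" using f unfolding dsum_set_def by blast
    show "a \<odot>\<^bsub>prod_module A Ms\<^esub> f \<in> dsum_set Ms"
      unfolding prod_module_simps dsum_set_def
      using module.smult_closed[OF mods a fn] finite_subset[OF sub fin] by simp
  qed
qed


lemma self_module_simps:
  "carrier (self_module A) = carrier A"
  "\<zero>\<^bsub>self_module A\<^esub> = \<zero>\<^bsub>A\<^esub>"
  "x \<oplus>\<^bsub>self_module A\<^esub> y = x \<oplus>\<^bsub>A\<^esub> y"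
  "a \<odot>\<^bsub>self_module A\<^esub> x = a \<otimes>\<^bsub>A\<^esub> x"
  by (simp_all add: self_module_def)

lemma self_is_module:
  assumes cr: "cring A"
  shows "module A (self_module A)"
proof -
  interpret cring A by (rule cr)
  have "comm_group (add_monoid (self_module A))"
    by (rule comm_group_cong[OF a_comm_group]) (simp_all add: self_module_def)
  then have ag: "abelian_group (self_module A)" by (rule comm_group_abelian_groupI)
  show ?thesis
    by (rule moduleI[OF cr ag]) (auto simp: self_module_simps l_distr r_distr m_assoc)
qed

lemma self_inv:
  assumes cr: "cring A" and x: "x \<in> carrier A"
  shows "\<ominus>\<^bsub>self_module A\<^esub> x = \<ominus>\<^bsub>A\<^esub> x"
proof -
  interpret cring A by (rule cr)
  interpret R: module A "self_module A" by (rule self_is_module[OF cr])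
  show ?thesis using x
    by (intro R.minus_equality) (auto simp: self_module_simps l_neg)
qed

lemma ideal_submodule:
  assumes cr: "cring A" and I: "ideal I A"
  shows "submodule I A (self_module A)"
proof -
  interpret cring A by (rule cr)
  interpret ideal I A by (rule I)
  interpret R: module A "self_module A" by (rule self_is_module[OF cr])
  show ?thesis
    by (rule R.submoduleI) (auto simp: self_module_simps self_inv[OF cr] I_l_closed)
qed

lemma additive_finsum:
  assumes G1: "abelian_group M1" and G2: "abelian_group M2"
    and gc: "\<And>x. x \<in> carrier M1 \<Longrightarrow> g x \<in> carrier M2"
    and ga: "\<And>x y. x \<in> carrier M1 \<Longrightarrow> y \<in> carrier M1 \<Longrightarrow> g (x \<oplus>\<^bsub>M1\<^esub> y) = g x \<oplus>\<^bsub>M2\<^esub> g y"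
    and F: "finite F" and f: "f \<in> F \<rightarrow> carrier M1"
  shows "g (finsum M1 f F) = finsum M2 (\<lambda>i. g (f i)) F"
  using F f
proof (induction F rule: finite_induct)
  case empty
  interpret G1: abelian_group M1 by (rule G1)
  interpret G2: abelian_group M2 by (rule G2)
  have "g \<zero>\<^bsub>M1\<^esub> = g \<zero>\<^bsub>M1\<^esub> \<oplus>\<^bsub>M2\<^esub> g \<zero>\<^bsub>M1\<^esub>" using ga[of "\<zero>\<^bsub>M1\<^esub>" "\<zero>\<^bsub>M1\<^esub>"] by simp
  then have "g \<zero>\<^bsub>M1\<^esub> = \<zero>\<^bsub>M2\<^esub>" using gc[of "\<zero>\<^bsub>M1\<^esub>"]
    by (metis G2.add.l_cancel_one' G2.add.r_cancel_one' G2.zero_closed G1.zero_closed)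
  then show ?case by simp
next
  case (insert i F)
  interpret G1: abelian_group M1 by (rule G1)
  interpret G2: abelian_group M2 by (rule G2)
  have fi: "f i \<in> carrier M1" using funcset_mem[OF insert.prems insertI1] .
  have fF: "f \<in> F \<rightarrow> carrier M1" using subsetD[OF Pi_anti_mono[OF subset_insertI] insert.prems] .
  have gF: "(\<lambda>i. g (f i)) \<in> F \<rightarrow> carrier M2" using fF gc by (simp add: Pi_iff)
  have "g (finsum M1 f (insert i F)) = g (f i \<oplus>\<^bsub>M1\<^esub> finsum M1 f F)"
    using G1.finsum_insert[OF insert.hyps fF fi] by simp
  also have "\<dots> = g (f i) \<oplus>\<^bsub>M2\<^esub> g (finsum M1 f F)"
    using ga[OF fi G1.finsum_closed[OF fF]] .
  also have "\<dots> = g (f i) \<oplus>\<^bsub>M2\<^esub> finsum M2 (\<lambda>i. g (f i)) F"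
    using insert.IH[OF fF] by simp
  also have "\<dots> = finsum M2 (\<lambda>i. g (f i)) (insert i F)"
    using G2.finsum_insert[OF insert.hyps gF gc[OF fi]] by simp
  finally show ?case .
qed

lemma mod_homI:
  assumes "\<And>x. x \<in> carrier M \<Longrightarrow> f x \<in> carrier N" "f \<in> extensional (carrier M)"
    "\<And>x y. x \<in> carrier M \<Longrightarrow> y \<in> carrier M \<Longrightarrow> f (x \<oplus>\<^bsub>M\<^esub> y) = f x \<oplus>\<^bsub>N\<^esub> f y"
    "\<And>a x. a \<in> carrier A \<Longrightarrow> x \<in> carrier M \<Longrightarrow> f (a \<odot>\<^bsub>M\<^esub> x) = a \<odot>\<^bsub>N\<^esub> f x"
  shows "f \<in> mod_hom A M N"
  using assms unfolding mod_hom_def by blast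

lemma mod_homD:
  assumes "f \<in> mod_hom A M N"
  shows "\<And>x. x \<in> carrier M \<Longrightarrow> f x \<in> carrier N" "f \<in> extensional (carrier M)"
    "\<And>x y. x \<in> carrier M \<Longrightarrow> y \<in> carrier M \<Longrightarrow> f (x \<oplus>\<^bsub>M\<^esub> y) = f x \<oplus>\<^bsub>N\<^esub> f y"
    "\<And>a x. a \<in> carrier A \<Longrightarrow> x \<in> carrier M \<Longrightarrow> f (a \<odot>\<^bsub>M\<^esub> x) = a \<odot>\<^bsub>N\<^esub> f x"
  using assms unfolding mod_hom_def by blast+

lemma hom_add_closed:
  assumes M: "module A M" and N: "module A N"
    and f: "f \<in> mod_hom A M N" and g: "g \<in> mod_hom A M N"
  shows "(\<lambda>x\<in>carrier M. f x \<oplus>\<^bsub>N\<^esub> g x) \<in> mod_hom A M N"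
proof (rule mod_homI)
  fix x assume x: "x \<in> carrier M"
  show "(\<lambda>x\<in>carrier M. f x \<oplus>\<^bsub>N\<^esub> g x) x \<in> carrier N"
    using x mod_homD(1)[OF f x] mod_homD(1)[OF g x] abelian_monoid.a_closed[OF abelian_group.axioms(1)[OF module.axioms(2)[OF N]]]
    by simp
next
  show "(\<lambda>x\<in>carrier M. f x \<oplus>\<^bsub>N\<^esub> g x) \<in> extensional (carrier M)" by (rule restrict_extensional)
next
  fix x y assume x: "x \<in> carrier M" and y: "y \<in> carrier M"
  have xy: "x \<oplus>\<^bsub>M\<^esub> y \<in> carrier M"
    using x y abelian_monoid.a_closed[OF abelian_group.axioms(1)[OF module.axioms(2)[OF M]]] by blast
  have fx: "f x \<in> carrier N" "f y \<in> carrier N" "g x \<in> carrier N" "g y \<in> carrier N"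
    using mod_homD(1)[OF f] mod_homD(1)[OF g] x y by blast+
  have "f x \<oplus>\<^bsub>N\<^esub> f y \<oplus>\<^bsub>N\<^esub> (g x \<oplus>\<^bsub>N\<^esub> g y) = f x \<oplus>\<^bsub>N\<^esub> g x \<oplus>\<^bsub>N\<^esub> (f y \<oplus>\<^bsub>N\<^esub> g y)"
  proof -
    interpret N: module A N by (rule N)
    show ?thesis using fx by (simp add: N.a_ac)
  qed
  then show "(\<lambda>x\<in>carrier M. f x \<oplus>\<^bsub>N\<^esub> g x) (x \<oplus>\<^bsub>M\<^esub> y) =
      (\<lambda>x\<in>carrier M. f x \<oplus>\<^bsub>N\<^esub> g x) x \<oplus>\<^bsub>N\<^esub> (\<lambda>x\<in>carrier M. f x \<oplus>\<^bsub>N\<^esub> g x) y"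
    using x y xy mod_homD(3)[OF f x y] mod_homD(3)[OF g x y] by simp
next
  fix a x assume a: "a \<in> carrier A" and x: "x \<in> carrier M"
  have ax: "a \<odot>\<^bsub>M\<^esub> x \<in> carrier M" using module.smult_closed[OF M a x] .
  have fx: "f x \<in> carrier N" "g x \<in> carrier N"
    using mod_homD(1)[OF f] mod_homD(1)[OF g] x by blast+
  show "(\<lambda>x\<in>carrier M. f x \<oplus>\<^bsub>N\<^esub> g x) (a \<odot>\<^bsub>M\<^esub> x) = a \<odot>\<^bsub>N\<^esub> (\<lambda>x\<in>carrier M. f x \<oplus>\<^bsub>N\<^esub> g x) x"
    using x ax mod_homD(4)[OF f a x] mod_homD(4)[OF g a x] module.smult_r_distr[OF N a fx] by simp
qed

lemma hom_smult_closed: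
  assumes M: "module A M" and N: "module A N"
    and f: "f \<in> mod_hom A M N" and c: "c \<in> carrier A"
  shows "(\<lambda>x\<in>carrier M. c \<odot>\<^bsub>N\<^esub> f x) \<in> mod_hom A M N"
proof (rule mod_homI)
  fix x assume x: "x \<in> carrier M"
  show "(\<lambda>x\<in>carrier M. c \<odot>\<^bsub>N\<^esub> f x) x \<in> carrier N"
    using x module.smult_closed[OF N c mod_homD(1)[OF f x]] by simp
next
  show "(\<lambda>x\<in>carrier M. c \<odot>\<^bsub>N\<^esub> f x) \<in> extensional (carrier M)" by (rule restrict_extensional)
next
  fix x y assume x: "x \<in> carrier M" and y: "y \<in> carrier M"
  have xy: "x \<oplus>\<^bsub>M\<^esub> y \<in> carrier M"
    using x y abelian_monoid.a_closed[OF abelian_group.axioms(1)[OF module.axioms(2)[OF M]]] by blast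
  show "(\<lambda>x\<in>carrier M. c \<odot>\<^bsub>N\<^esub> f x) (x \<oplus>\<^bsub>M\<^esub> y) =
      (\<lambda>x\<in>carrier M. c \<odot>\<^bsub>N\<^esub> f x) x \<oplus>\<^bsub>N\<^esub> (\<lambda>x\<in>carrier M. c \<odot>\<^bsub>N\<^esub> f x) y"
    using x y xy mod_homD(3)[OF f x y] module.smult_r_distr[OF N c mod_homD(1)[OF f x] mod_homD(1)[OF f y]] by simp
next
  fix a x assume a: "a \<in> carrier A" and x: "x \<in> carrier M"
  have ax: "a \<odot>\<^bsub>M\<^esub> x \<in> carrier M" using module.smult_closed[OF M a x] .
  have fx: "f x \<in> carrier N" using mod_homD(1)[OF f x] .
  have cr: "cring A" using module.axioms(1)[OF N] .
  have "c \<odot>\<^bsub>N\<^esub> (a \<odot>\<^bsub>N\<^esub> f x) = a \<odot>\<^bsub>N\<^esub> (c \<odot>\<^bsub>N\<^esub> f x)"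
    using module.smult_assoc1[OF N c a fx] module.smult_assoc1[OF N a c fx] comm_monoid.m_comm[OF cring.axioms(2)[OF cr] a c] by simp
  then show "(\<lambda>x\<in>carrier M. c \<odot>\<^bsub>N\<^esub> f x) (a \<odot>\<^bsub>M\<^esub> x) = a \<odot>\<^bsub>N\<^esub> (\<lambda>x\<in>carrier M. c \<odot>\<^bsub>N\<^esub> f x) x"
    using x ax mod_homD(4)[OF f a x] by simp
qed


definition vecs :: "('a,'b) ring_scheme \<Rightarrow> nat \<Rightarrow> (nat \<Rightarrow> 'a) set" where
  "vecs A r = {a. (\<forall>i<r. a i \<in> carrier A) \<and> (\<forall>i\<ge>r. a i = \<zero>\<^bsub>A\<^esub>)}"
definition vadd :: "('a,'b) ring_scheme \<Rightarrow> (nat \<Rightarrow> 'a) \<Rightarrow> (nat \<Rightarrow> 'a) \<Rightarrow> (nat \<Rightarrow> 'a)" where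
  "vadd A a b = (\<lambda>i. a i \<oplus>\<^bsub>A\<^esub> b i)"
definition vsmult :: "('a,'b) ring_scheme \<Rightarrow> 'a \<Rightarrow> (nat \<Rightarrow> 'a) \<Rightarrow> (nat \<Rightarrow> 'a)" where
  "vsmult A c a = (\<lambda>i. c \<otimes>\<^bsub>A\<^esub> a i)"

lemma ideal_proj:
  assumes cr: "cring A"
    and Kc: "\<And>a. a \<in> K \<Longrightarrow> a r \<in> carrier A"
    and z: "(\<lambda>i. \<zero>\<^bsub>A\<^esub>) \<in> K" "P (\<lambda>i. \<zero>\<^bsub>A\<^esub>)"
    and add: "\<And>a b. a \<in> K \<Longrightarrow> b \<in> K \<Longrightarrow> P a \<Longrightarrow> P b \<Longrightarrow> vadd A a b \<in> K \<and> P (vadd A a b)"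
    and sm: "\<And>c a. c \<in> carrier A \<Longrightarrow> a \<in> K \<Longrightarrow> P a \<Longrightarrow> vsmult A c a \<in> K \<and> P (vsmult A c a)"
  shows "ideal ((\<lambda>a. a r) ` {a\<in>K. P a}) A"
proof -
  interpret cring A by (rule cr)
  let ?J = "(\<lambda>a. a r) ` {a\<in>K. P a}"
  have sub: "?J \<subseteq> carrier A" using Kc by blast
  have ne: "?J \<noteq> {}" using z by blast
  have inv: "\<ominus>\<^bsub>A\<^esub> j \<in> ?J" if j: "j \<in> ?J" for j
  proof -
    obtain a where a: "a \<in> K" "P a" "j = a r" using j by blast
    have "vsmult A (\<ominus>\<^bsub>A\<^esub> \<one>\<^bsub>A\<^esub>) a \<in> K \<and> P (vsmult A (\<ominus>\<^bsub>A\<^esub> \<one>\<^bsub>A\<^esub>) a)" using sm[OF _ a(1,2)] by simp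
    moreover have "vsmult A (\<ominus>\<^bsub>A\<^esub> \<one>\<^bsub>A\<^esub>) a r = \<ominus>\<^bsub>A\<^esub> j" using Kc[OF a(1)] a(3)
      by (simp add: vsmult_def l_minus)
    ultimately show ?thesis by (metis (mono_tags, lifting) image_eqI mem_Collect_eq)
  qed
  have mul: "j \<oplus>\<^bsub>A\<^esub> k \<in> ?J" if j: "j \<in> ?J" and k: "k \<in> ?J" for j k
  proof -
    obtain a where a: "a \<in> K" "P a" "j = a r" using j by blast
    obtain b where b: "b \<in> K" "P b" "k = b r" using k by blast
    have "vadd A a b \<in> K \<and> P (vadd A a b)" using add[OF a(1) b(1) a(2) b(2)] .
    moreover have "vadd A a b r = j \<oplus>\<^bsub>A\<^esub> k" using a(3) b(3) by (simp add: vadd_def)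
    ultimately show ?thesis by (metis (mono_tags, lifting) image_eqI mem_Collect_eq)
  qed
  have sg: "subgroup ?J (add_monoid A)"
    by (rule add.subgroupI[OF sub ne inv mul])
  have lc: "x \<otimes>\<^bsub>A\<^esub> j \<in> ?J" if j: "j \<in> ?J" and x: "x \<in> carrier A" for j x
  proof -
    obtain a where a: "a \<in> K" "P a" "j = a r" using j by blast
    have "vsmult A x a \<in> K \<and> P (vsmult A x a)" using sm[OF x a(1,2)] .
    moreover have "vsmult A x a r = x \<otimes>\<^bsub>A\<^esub> j" using a(3) by (simp add: vsmult_def)
    ultimately show ?thesis by (metis (mono_tags, lifting) image_eqI mem_Collect_eq)
  qed
  show ?thesis
  proof (rule idealI[OF ring_axioms sg])
    fix j x assume j: "j \<in> ?J" and x: "x \<in> carrier A"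
    show "x \<otimes>\<^bsub>A\<^esub> j \<in> ?J" using lc[OF j x] .
    have "j \<in> carrier A" using sub j by blast
    then show "j \<otimes>\<^bsub>A\<^esub> x \<in> ?J" using lc[OF j x] x by (simp add: m_comm)
  qed
qed

lemma noeth_vec:
  assumes noe: "noetherian_ring A" and cr: "cring A"
    and Kv: "K \<subseteq> vecs A r"
    and z: "(\<lambda>i. \<zero>\<^bsub>A\<^esub>) \<in> K"
    and add: "\<And>a b. a \<in> K \<Longrightarrow> b \<in> K \<Longrightarrow> vadd A a b \<in> K"
    and sm: "\<And>c a. c \<in> carrier A \<Longrightarrow> a \<in> K \<Longrightarrow> vsmult A c a \<in> K"
    and Bf: "\<And>a. a \<in> K \<Longrightarrow> finite (B a)"
    and Badd: "\<And>a b. a \<in> K \<Longrightarrow> b \<in> K \<Longrightarrow> B (vadd A a b) \<subseteq> B a \<union> B b"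
    and Bsm: "\<And>c a. c \<in> carrier A \<Longrightarrow> a \<in> K \<Longrightarrow> B (vsmult A c a) \<subseteq> B a"
  shows "finite (\<Union>a\<in>K. B a)"
  using Kv z add sm Bf Badd Bsm
proof (induction r arbitrary: K)
  case 0
  have "K \<subseteq> {(\<lambda>i. \<zero>\<^bsub>A\<^esub>)}"
  proof
    fix a assume "a \<in> K"
    then have "a \<in> vecs A 0" using "0.prems"(1) by blast
    then have "a = (\<lambda>i. \<zero>\<^bsub>A\<^esub>)" unfolding vecs_def by auto
    then show "a \<in> {(\<lambda>i. \<zero>\<^bsub>A\<^esub>)}" by simp
  qed
  then have "(\<Union>a\<in>K. B a) \<subseteq> B (\<lambda>i. \<zero>\<^bsub>A\<^esub>)" by blast
  then show ?case using "0.prems"(5)[OF "0.prems"(2)] finite_subset by blast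
next
  case (Suc r)
  interpret cring A by (rule cr)
  note Kv = Suc.prems(1) and z = Suc.prems(2) and add = Suc.prems(3) and sm = Suc.prems(4)
    and Bf = Suc.prems(5) and Badd = Suc.prems(6) and Bsm = Suc.prems(7)
  have Kc: "\<And>a i. a \<in> K \<Longrightarrow> a i \<in> carrier A"
  proof -
    fix a i assume a: "a \<in> K"
    have h: "(\<forall>i<Suc r. a i \<in> carrier A) \<and> (\<forall>i\<ge>Suc r. a i = \<zero>\<^bsub>A\<^esub>)"
      using subsetD[OF Kv a] unfolding vecs_def by simp
    show "a i \<in> carrier A"
    proof (cases "i < Suc r")
      case True then show ?thesis using h by blast
    next
      case False then show ?thesis using h zero_closed by simp
    qed
  qed
  define K' where "K' = {a\<in>K. a r = \<zero>\<^bsub>A\<^esub>}"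
  have K'v: "K' \<subseteq> vecs A r"
  proof
    fix a assume a: "a \<in> K'"
    have aK: "a \<in> K" and ar: "a r = \<zero>\<^bsub>A\<^esub>" using a unfolding K'_def by simp_all
    have h: "(\<forall>i<Suc r. a i \<in> carrier A) \<and> (\<forall>i\<ge>Suc r. a i = \<zero>\<^bsub>A\<^esub>)"
      using subsetD[OF Kv aK] unfolding vecs_def by simp
    have "\<forall>i\<ge>r. a i = \<zero>\<^bsub>A\<^esub>"
    proof (intro allI impI)
      fix i assume "r \<le> i"
      then have "i = r \<or> Suc r \<le> i" by linarith
      then show "a i = \<zero>\<^bsub>A\<^esub>" using h ar by blast
    qed
    then show "a \<in> vecs A r" unfolding vecs_def using h by simp
  qed
  have fin1: "finite (\<Union>a\<in>K'. B a)"
  proof (rule Suc.IH[OF K'v])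
    show "(\<lambda>i. \<zero>\<^bsub>A\<^esub>) \<in> K'" using z unfolding K'_def by simp
    fix a b assume a: "a \<in> K'" and b: "b \<in> K'"
    show "vadd A a b \<in> K'" using a b add unfolding K'_def by (simp add: vadd_def)
    show "B (vadd A a b) \<subseteq> B a \<union> B b" using a b Badd unfolding K'_def by blast
  next
    fix c a assume c: "c \<in> carrier A" and a: "a \<in> K'"
    show "vsmult A c a \<in> K'" using a c sm unfolding K'_def by (simp add: vsmult_def)
    show "B (vsmult A c a) \<subseteq> B a" using a c Bsm unfolding K'_def by blast
  next
    fix a assume "a \<in> K'" then show "finite (B a)" using Bf unfolding K'_def by blast
  qed
  define J where "J = (\<lambda>a. a r) ` {a\<in>K. True}"
  have idJ: "ideal J A" unfolding J_def
    by (rule ideal_proj[OF cr]) (auto intro: Kc z add sm)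
  obtain F where F: "F \<subseteq> carrier A" "finite F" "J = Idl\<^bsub>A\<^esub> F"
    using noetherian_ring.finetely_gen[OF noe idJ] by blast
  have FJ: "F \<subseteq> J" using genideal_self[OF F(1)] F(3) by simp
  have "\<forall>f\<in>F. \<exists>a. a \<in> K \<and> a r = f" using FJ unfolding J_def by blast
  then obtain af where af: "\<And>f. f \<in> F \<Longrightarrow> af f \<in> K \<and> af f r = f" by metis
  define D where "D = (\<Union>a\<in>K'. B a) \<union> (\<Union>f\<in>F. B (af f))"
  have finD: "finite D" unfolding D_def using fin1 F(2) af Bf by auto
  define J0 where "J0 = (\<lambda>a. a r) ` {a\<in>K. B a \<subseteq> D}"
  have z': "(\<lambda>i. \<zero>\<^bsub>A\<^esub>) \<in> K'" using z unfolding K'_def by simp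
  have idJ0: "ideal J0 A" unfolding J0_def
  proof (rule ideal_proj[OF cr])
    show "B (\<lambda>i. \<zero>\<^bsub>A\<^esub>) \<subseteq> D" using z' unfolding D_def by blast
    fix a b assume "a \<in> K" "b \<in> K" "B a \<subseteq> D" "B b \<subseteq> D"
    then show "vadd A a b \<in> K \<and> B (vadd A a b) \<subseteq> D" using add Badd by blast
  next
    fix c a assume "c \<in> carrier A" "a \<in> K" "B a \<subseteq> D"
    then show "vsmult A c a \<in> K \<and> B (vsmult A c a) \<subseteq> D" using sm Bsm by blast
  qed (auto intro: Kc z)
  have "F \<subseteq> J0"
  proof
    fix f assume f: "f \<in> F"
    have "B (af f) \<subseteq> D" using f unfolding D_def by blast
    then show "f \<in> J0" using af[OF f] unfolding J0_def by (metis (mono_tags, lifting) image_eqI mem_Collect_eq)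
  qed
  then have JJ0: "J \<subseteq> J0" using genideal_minimal[OF idJ0] F(3) by simp
  have "B a \<subseteq> D" if a: "a \<in> K" for a
  proof -
    have "a r \<in> J" using a unfolding J_def by blast
    then have "a r \<in> J0" using JJ0 by blast
    then obtain b where b: "b \<in> K" "B b \<subseteq> D" "a r = b r" unfolding J0_def by blast
    define c where "c = vadd A a (vsmult A (\<ominus>\<^bsub>A\<^esub> \<one>\<^bsub>A\<^esub>) b)"
    have cK: "c \<in> K" unfolding c_def using add[OF a sm[OF _ b(1)]] by simp
    have "c r = \<zero>\<^bsub>A\<^esub>" unfolding c_def vadd_def vsmult_def using b(3) Kc[OF a, of r]
      by (simp add: l_minus r_neg)
    then have cK': "c \<in> K'" using cK unfolding K'_def by simp
    have "vadd A c b = a"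
    proof
      fix i
      have ai: "a i \<in> carrier A" and bi: "b i \<in> carrier A" using Kc a b(1) by blast+
      show "vadd A c b i = a i" unfolding c_def vadd_def vsmult_def using ai bi
        by (simp add: l_minus a_assoc l_neg)
    qed
    then have "B a \<subseteq> B c \<union> B b" using Badd[OF cK b(1)] by simp
    moreover have "B c \<subseteq> D" using cK' unfolding D_def by blast
    ultimately show ?thesis using b(2) by blast
  qed
  then have "(\<Union>a\<in>K. B a) \<subseteq> D" by blast
  then show ?case using finD finite_subset by blast
qed


lemma ag_diff_zero:
  assumes G: "abelian_group G" and x: "x \<in> carrier G" and y: "y \<in> carrier G"
  shows "(x \<oplus>\<^bsub>G\<^esub> \<ominus>\<^bsub>G\<^esub> y = \<zero>\<^bsub>G\<^esub>) \<longleftrightarrow> x = y"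
proof -
  interpret abelian_group G by (rule G)
  show ?thesis
  proof
    assume "x \<oplus>\<^bsub>G\<^esub> \<ominus>\<^bsub>G\<^esub> y = \<zero>\<^bsub>G\<^esub>"
    then have "x \<oplus>\<^bsub>G\<^esub> \<ominus>\<^bsub>G\<^esub> y \<oplus>\<^bsub>G\<^esub> y = y" using y by simp
    then show "x = y" using x y by (simp add: a_assoc l_neg)
  next
    assume "x = y" then show "x \<oplus>\<^bsub>G\<^esub> \<ominus>\<^bsub>G\<^esub> y = \<zero>\<^bsub>G\<^esub>" using y by (simp add: r_neg)
  qed
qed

locale setting =
  fixes A :: "('a, 'c) ring_scheme" and I :: "nat \<Rightarrow> 'a set" and M :: "('a, 'm) module"
    and xs :: "nat \<Rightarrow> 'm" and r :: nat
  assumes noe: "noetherian_domain A"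
    and idl: "\<And>n. ideal (I n) A"
    and modM: "module A M"
    and xsM: "xs ` {..<r} \<subseteq> carrier M"
    and gen: "carrier M = \<Inter>{H. submodule H A M \<and> xs ` {..<r} \<subseteq> H}"
begin

abbreviation "AQ n \<equiv> quot_module A (self_module A) (I n)"
abbreviation "PP \<equiv> prod_module A AQ"
abbreviation "SS \<equiv> dsum_set AQ"
abbreviation "PS \<equiv> quot_module A PP SS"

lemma cr: "cring A" using noe noetherian_domain.axioms(2) domain.axioms(1) by blast
lemma noer: "noetherian_ring A" using noe noetherian_domain.axioms(1) by blast

lemma modR: "module A (self_module A)" using self_is_module[OF cr] .
lemma modQ: "module A (AQ n)" using quot_is_module[OF modR ideal_submodule[OF cr idl]] .
lemma modP: "module A PP" using prod_is_module[OF modQ cr] .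
lemma subS: "submodule SS A PP" using dsum_submodule[OF modQ cr] .
lemma modPS: "module A PS" using quot_is_module[OF modP subS] .

lemma agM: "abelian_group M" using modM module.axioms(2) by blast
lemma agQ: "abelian_group (AQ n)" using modQ module.axioms(2) by blast
lemma agP: "abelian_group PP" using modP module.axioms(2) by blast
lemma agPS: "abelian_group PS" using modPS module.axioms(2) by blast

definition lin :: "(nat \<Rightarrow> 'a) \<Rightarrow> 'm" where
  "lin a = finsum M (\<lambda>i. a i \<odot>\<^bsub>M\<^esub> xs i) {..<r}"

lemma vecs_carrier: "a \<in> vecs A r \<Longrightarrow> a i \<in> carrier A"
proof -
  assume a: "a \<in> vecs A r"
  then have h: "(\<forall>i<r. a i \<in> carrier A) \<and> (\<forall>i\<ge>r. a i = \<zero>\<^bsub>A\<^esub>)" unfolding vecs_def by simp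
  show "a i \<in> carrier A"
  proof (cases "i < r")
    case True then show ?thesis using h by blast
  next
    case False then show ?thesis using h cring.axioms(1)[OF cr] ring.ring_simprules(2) by force
  qed
qed

lemma xs_carrier: "i < r \<Longrightarrow> xs i \<in> carrier M" using xsM by blast

lemma lin_summand: "a \<in> vecs A r \<Longrightarrow> (\<lambda>i. a i \<odot>\<^bsub>M\<^esub> xs i) \<in> {..<r} \<rightarrow> carrier M"
  using module.smult_closed[OF modM vecs_carrier xs_carrier] by blast

lemma lin_closed: "a \<in> vecs A r \<Longrightarrow> lin a \<in> carrier M"
  unfolding lin_def using abelian_monoid.finsum_closed[OF abelian_group.axioms(1)[OF agM] lin_summand] .

lemma vadd_vecs: "a \<in> vecs A r \<Longrightarrow> b \<in> vecs A r \<Longrightarrow> vadd A a b \<in> vecs A r"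
proof -
  assume a: "a \<in> vecs A r" and b: "b \<in> vecs A r"
  interpret cring A by (rule cr)
  show ?thesis unfolding vecs_def vadd_def
  proof (intro CollectI conjI allI impI)
    fix i show "a i \<oplus>\<^bsub>A\<^esub> b i \<in> carrier A" using vecs_carrier[OF a] vecs_carrier[OF b] by simp
  next
    fix i assume "r \<le> i"
    then show "a i \<oplus>\<^bsub>A\<^esub> b i = \<zero>\<^bsub>A\<^esub>" using a b unfolding vecs_def by simp
  qed
qed

lemma vsmult_vecs: "c \<in> carrier A \<Longrightarrow> a \<in> vecs A r \<Longrightarrow> vsmult A c a \<in> vecs A r"
proof -
  assume c: "c \<in> carrier A" and a: "a \<in> vecs A r"
  interpret cring A by (rule cr)
  show ?thesis unfolding vecs_def vsmult_def
  proof (intro CollectI conjI allI impI)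
    fix i show "c \<otimes>\<^bsub>A\<^esub> a i \<in> carrier A" using c vecs_carrier[OF a] by simp
  next
    fix i assume "r \<le> i"
    then show "c \<otimes>\<^bsub>A\<^esub> a i = \<zero>\<^bsub>A\<^esub>" using a c unfolding vecs_def by simp
  qed
qed

lemma zero_vecs: "(\<lambda>i. \<zero>\<^bsub>A\<^esub>) \<in> vecs A r"
  using cring.axioms(1)[OF cr] ring.ring_simprules(2) unfolding vecs_def by force

lemma lin_vadd: "a \<in> vecs A r \<Longrightarrow> b \<in> vecs A r \<Longrightarrow> lin (vadd A a b) = lin a \<oplus>\<^bsub>M\<^esub> lin b"
proof -
  assume a: "a \<in> vecs A r" and b: "b \<in> vecs A r"
  interpret M: module A M by (rule modM)
  have "lin (vadd A a b) = finsum M (\<lambda>i. a i \<odot>\<^bsub>M\<^esub> xs i \<oplus>\<^bsub>M\<^esub> b i \<odot>\<^bsub>M\<^esub> xs i) {..<r}"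
    unfolding lin_def vadd_def
    by (rule M.finsum_cong') (auto simp: M.smult_l_distr vecs_carrier[OF a] vecs_carrier[OF b] xs_carrier
          intro: M.smult_closed vecs_carrier[OF a] vecs_carrier[OF b] xs_carrier)
  also have "\<dots> = lin a \<oplus>\<^bsub>M\<^esub> lin b"
    unfolding lin_def by (rule M.finsum_addf[OF lin_summand[OF a] lin_summand[OF b]])
  finally show ?thesis .
qed

lemma lin_vsmult: "c \<in> carrier A \<Longrightarrow> a \<in> vecs A r \<Longrightarrow> lin (vsmult A c a) = c \<odot>\<^bsub>M\<^esub> lin a"
proof -
  assume c: "c \<in> carrier A" and a: "a \<in> vecs A r"
  interpret M: module A M by (rule modM)
  have "lin (vsmult A c a) = finsum M (\<lambda>i. c \<odot>\<^bsub>M\<^esub> (a i \<odot>\<^bsub>M\<^esub> xs i)) {..<r}"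
    unfolding lin_def vsmult_def
    by (rule M.finsum_cong') (auto simp: M.smult_assoc1 c vecs_carrier[OF a] xs_carrier
          intro: M.smult_closed c vecs_carrier[OF a] xs_carrier)
  also have "\<dots> = c \<odot>\<^bsub>M\<^esub> lin a"
    unfolding lin_def by (rule M.finsum_smult_ldistr[symmetric, OF _ c lin_summand[OF a]]) simp
  finally show ?thesis .
qed

end


context setting begin

lemma lin_zero: "lin (\<lambda>i. \<zero>\<^bsub>A\<^esub>) = \<zero>\<^bsub>M\<^esub>"
proof -
  interpret M: module A M by (rule modM)
  have "lin (\<lambda>i. \<zero>\<^bsub>A\<^esub>) = finsum M (\<lambda>i. \<zero>\<^bsub>M\<^esub>) {..<r}"
    unfolding lin_def by (rule M.finsum_cong') (auto simp: xs_carrier)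
  also have "\<dots> = \<zero>\<^bsub>M\<^esub>" by (rule M.finsum_zero)
  finally show ?thesis .
qed

lemma span: "x \<in> carrier M \<Longrightarrow> \<exists>a\<in>vecs A r. lin a = x"
proof -
  assume x: "x \<in> carrier M"
  interpret M: module A M by (rule modM)
  interpret cring A by (rule cr)
  let ?Sp = "lin ` vecs A r"
  have sub: "submodule ?Sp A M"
  proof (rule M.submoduleI)
    show "?Sp \<subseteq> carrier M" using lin_closed by blast
    show "\<zero>\<^bsub>M\<^esub> \<in> ?Sp" using lin_zero zero_vecs by (metis image_eqI)
  next
    fix y assume "y \<in> ?Sp"
    then obtain a where a: "a \<in> vecs A r" "y = lin a" by blast
    have m1: "\<ominus>\<^bsub>A\<^esub> \<one>\<^bsub>A\<^esub> \<in> carrier A" by simp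
    have "lin (vsmult A (\<ominus>\<^bsub>A\<^esub> \<one>\<^bsub>A\<^esub>) a) = \<ominus>\<^bsub>M\<^esub> y"
      using lin_vsmult[OF m1 a(1)] M.smult_l_minus[OF M.R.one_closed lin_closed[OF a(1)]] a(2)
        M.smult_one[OF lin_closed[OF a(1)]] by simp
    then show "\<ominus>\<^bsub>M\<^esub> y \<in> ?Sp" using vsmult_vecs[OF m1 a(1)] by (metis image_eqI)
  next
    fix y z assume "y \<in> ?Sp" "z \<in> ?Sp"
    then obtain a b where a: "a \<in> vecs A r" "y = lin a" and b: "b \<in> vecs A r" "z = lin b" by blast
    show "y \<oplus>\<^bsub>M\<^esub> z \<in> ?Sp" using lin_vadd[OF a(1) b(1)] vadd_vecs[OF a(1) b(1)] a(2) b(2)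
      by (metis image_eqI)
  next
    fix c y assume c: "c \<in> carrier A" and "y \<in> ?Sp"
    then obtain a where a: "a \<in> vecs A r" "y = lin a" by blast
    show "c \<odot>\<^bsub>M\<^esub> y \<in> ?Sp" using lin_vsmult[OF c a(1)] vsmult_vecs[OF c a(1)] a(2)
      by (metis image_eqI)
  qed
  have gens: "xs ` {..<r} \<subseteq> ?Sp"
  proof
    fix y assume "y \<in> xs ` {..<r}"
    then obtain j where j: "j < r" "y = xs j" by blast
    define e where "e = (\<lambda>i. if i = j then \<one>\<^bsub>A\<^esub> else \<zero>\<^bsub>A\<^esub>)"
    have ev: "e \<in> vecs A r" unfolding vecs_def e_def using j(1) by auto
    have "lin e = finsum M (\<lambda>i. if j = i then xs i else \<zero>\<^bsub>M\<^esub>) {..<r}"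
      unfolding lin_def e_def by (rule M.finsum_cong') (auto simp: xs_carrier)
    also have "\<dots> = xs j"
      by (rule M.finsum_singleton) (auto simp: j(1) xs_carrier)
    finally show "y \<in> ?Sp" using ev j(2) by (metis image_eqI)
  qed
  have "carrier M \<subseteq> ?Sp" using gen sub gens by blast
  then show ?thesis using x by blast
qed

lemma hom_zero:
  assumes N: "module A N" and g: "g \<in> mod_hom A M N"
  shows "g \<zero>\<^bsub>M\<^esub> = \<zero>\<^bsub>N\<^esub>"
proof -
  interpret M: module A M by (rule modM)
  interpret N: module A N by (rule N)
  have "\<zero>\<^bsub>A\<^esub> \<odot>\<^bsub>M\<^esub> \<zero>\<^bsub>M\<^esub> = \<zero>\<^bsub>M\<^esub>" by simp
  then have "g \<zero>\<^bsub>M\<^esub> = \<zero>\<^bsub>A\<^esub> \<odot>\<^bsub>N\<^esub> g \<zero>\<^bsub>M\<^esub>"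
    using mod_homD(4)[OF g, of "\<zero>\<^bsub>A\<^esub>" "\<zero>\<^bsub>M\<^esub>"] by simp
  also have "\<dots> = \<zero>\<^bsub>N\<^esub>" using mod_homD(1)[OF g M.zero_closed] by simp
  finally show ?thesis .
qed

lemma hom_lin:
  assumes N: "module A N" and g: "g \<in> mod_hom A M N" and a: "a \<in> vecs A r"
  shows "g (lin a) = finsum N (\<lambda>i. a i \<odot>\<^bsub>N\<^esub> g (xs i)) {..<r}"
proof -
  interpret N: module A N by (rule N)
  have "g (lin a) = finsum N (\<lambda>i. g (a i \<odot>\<^bsub>M\<^esub> xs i)) {..<r}"
    unfolding lin_def
    by (rule additive_finsum[OF agM module.axioms(2)[OF N] mod_homD(1)[OF g] mod_homD(3)[OF g] _ lin_summand[OF a]]) simp_all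
  also have "\<dots> = finsum N (\<lambda>i. a i \<odot>\<^bsub>N\<^esub> g (xs i)) {..<r}"
    by (rule N.finsum_cong') (auto simp: mod_homD(4)[OF g] vecs_carrier[OF a] xs_carrier
        intro: N.smult_closed vecs_carrier[OF a] mod_homD(1)[OF g] xs_carrier)
  finally show ?thesis .
qed

lemma hom_ext:
  assumes N: "module A N" and g: "g \<in> mod_hom A M N" and h: "h \<in> mod_hom A M N"
    and eq: "\<And>i. i < r \<Longrightarrow> g (xs i) = h (xs i)"
  shows "g = h"
proof
  fix x
  show "g x = h x"
  proof (cases "x \<in> carrier M")
    case True
    then obtain a where a: "a \<in> vecs A r" "lin a = x" using span by blast
    interpret N: module A N by (rule N)
    have "g (lin a) = h (lin a)"
      unfolding hom_lin[OF N g a(1)] hom_lin[OF N h a(1)]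
      by (rule N.finsum_cong') (auto simp: eq vecs_carrier[OF a(1)] xs_carrier
        intro: N.smult_closed vecs_carrier[OF a(1)] mod_homD(1)[OF h] xs_carrier)
    then show ?thesis using a(2) by simp
  next
    case False
    then show ?thesis using mod_homD(2)[OF g] mod_homD(2)[OF h] by (simp add: extensional_def)
  qed
qed

end


context setting begin

lemma P_carrier: "p \<in> carrier PP \<longleftrightarrow> (\<forall>n. p n \<in> carrier (AQ n))"
  by (simp add: prod_module_simps)

lemma PS_carrier: "carrier PS = {SS +>\<^bsub>PP\<^esub> p | p. p \<in> carrier PP}"
  using quot_carrier[OF modP] .

lemma PS_zero: "\<zero>\<^bsub>PS\<^esub> = SS" by (simp add: quot_module_simps)

lemma PS_add: "p \<in> carrier PP \<Longrightarrow> q \<in> carrier PP \<Longrightarrow>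
   (SS +>\<^bsub>PP\<^esub> p) \<oplus>\<^bsub>PS\<^esub> (SS +>\<^bsub>PP\<^esub> q) = SS +>\<^bsub>PP\<^esub> (p \<oplus>\<^bsub>PP\<^esub> q)"
  using quot_add[OF modP subS] .

lemma PS_smult: "c \<in> carrier A \<Longrightarrow> p \<in> carrier PP \<Longrightarrow>
   c \<odot>\<^bsub>PS\<^esub> (SS +>\<^bsub>PP\<^esub> p) = SS +>\<^bsub>PP\<^esub> (c \<odot>\<^bsub>PP\<^esub> p)"
  using quot_smult[OF modP subS] .

lemma cos_eq:
  assumes p: "p \<in> carrier PP" and q: "q \<in> carrier PP"
  shows "(SS +>\<^bsub>PP\<^esub> p = SS +>\<^bsub>PP\<^esub> q) \<longleftrightarrow> finite {n. p n \<noteq> q n}"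
proof -
  have pn: "\<And>n. p n \<in> carrier (AQ n)" and qn: "\<And>n. q n \<in> carrier (AQ n)"
    using p q P_carrier by blast+
  have e: "p \<oplus>\<^bsub>PP\<^esub> \<ominus>\<^bsub>PP\<^esub> q = (\<lambda>n. p n \<oplus>\<^bsub>AQ n\<^esub> \<ominus>\<^bsub>AQ n\<^esub> q n)"
    unfolding prod_inv[OF modQ q] by (simp add: prod_module_simps)
  have cl: "\<And>n. p n \<oplus>\<^bsub>AQ n\<^esub> \<ominus>\<^bsub>AQ n\<^esub> q n \<in> carrier (AQ n)"
    using abelian_monoid.a_closed[OF abelian_group.axioms(1)[OF agQ] pn abelian_group.a_inv_closed[OF agQ qn]] .
  have s: "{n. p n \<oplus>\<^bsub>AQ n\<^esub> \<ominus>\<^bsub>AQ n\<^esub> q n \<noteq> \<zero>\<^bsub>AQ n\<^esub>} = {n. p n \<noteq> q n}"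
    using ag_diff_zero[OF agQ pn qn] by blast
  have "(SS +>\<^bsub>PP\<^esub> p = SS +>\<^bsub>PP\<^esub> q) \<longleftrightarrow> (\<lambda>n. p n \<oplus>\<^bsub>AQ n\<^esub> \<ominus>\<^bsub>AQ n\<^esub> q n) \<in> SS"
    using quot_eq[OF modP subS p q] e by simp
  also have "\<dots> \<longleftrightarrow> finite {n. p n \<noteq> q n}"
    unfolding dsum_set_def using cl s by simp
  finally show ?thesis .
qed

lemma cos_in:
  assumes p: "p \<in> carrier PP" and e: "SS +>\<^bsub>PP\<^esub> p = SS"
  shows "p \<in> SS"
proof -
  have "p \<in> SS +>\<^bsub>PP\<^esub> p"
    using abelian_subgroup.a_rcos_self[OF sub_abelian[OF modP subS] p] .
  then show ?thesis using e by simp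
qed

lemma proj_finsum:
  assumes F: "finite F" and y: "y \<in> F \<rightarrow> carrier PP"
  shows "(finsum PP y F) n = finsum (AQ n) (\<lambda>i. y i n) F"
proof -
  have "(\<lambda>p. p n) (finsum PP y F) = finsum (AQ n) (\<lambda>i. (\<lambda>p. p n) (y i)) F"
  proof (rule additive_finsum[OF agP agQ _ _ F y])
    fix x assume "x \<in> carrier PP" then show "x n \<in> carrier (AQ n)" using P_carrier by blast
  next
    fix x z show "(x \<oplus>\<^bsub>PP\<^esub> z) n = x n \<oplus>\<^bsub>AQ n\<^esub> z n" by (simp add: prod_module_simps)
  qed
  then show ?thesis by simp
qed

lemma cos_finsum:
  assumes F: "finite F" and y: "y \<in> F \<rightarrow> carrier PP"
  shows "SS +>\<^bsub>PP\<^esub> (finsum PP y F) = finsum PS (\<lambda>i. SS +>\<^bsub>PP\<^esub> y i) F"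
proof (rule additive_finsum[OF agP agPS _ _ F y])
  fix x assume "x \<in> carrier PP" then show "SS +>\<^bsub>PP\<^esub> x \<in> carrier PS" unfolding PS_carrier by blast
next
  fix x z assume "x \<in> carrier PP" "z \<in> carrier PP"
  then show "SS +>\<^bsub>PP\<^esub> (x \<oplus>\<^bsub>PP\<^esub> z) = (SS +>\<^bsub>PP\<^esub> x) \<oplus>\<^bsub>PS\<^esub> (SS +>\<^bsub>PP\<^esub> z)"
    using PS_add by simp
qed

definition islift :: "('m \<Rightarrow> (nat \<Rightarrow> 'a set) set) \<Rightarrow> (nat \<Rightarrow> 'm \<Rightarrow> 'a set) \<Rightarrow> bool" where
  "islift f g \<longleftrightarrow> (\<forall>n. g n \<in> mod_hom A M (AQ n)) \<and> (\<forall>x\<in>carrier M. f x = SS +>\<^bsub>PP\<^esub> (\<lambda>n. g n x))"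

lemma lift_carrier:
  assumes g: "\<And>n. g n \<in> mod_hom A M (AQ n)" and x: "x \<in> carrier M"
  shows "(\<lambda>n. g n x) \<in> carrier PP"
  unfolding P_carrier
proof
  fix n show "g n x \<in> carrier (AQ n)" by (rule mod_homD(1)[OF g x])
qed

lemma lift_unique:
  assumes g: "islift f g" and h: "islift f h"
  shows "finite {n. g n \<noteq> h n}"
proof -
  have gh: "\<And>n. g n \<in> mod_hom A M (AQ n)" "\<And>n. h n \<in> mod_hom A M (AQ n)"
    using g h unfolding islift_def by blast+
  have fin: "finite {n. g n (xs i) \<noteq> h n (xs i)}" if i: "i < r" for i
  proof -
    have x: "xs i \<in> carrier M" using xs_carrier[OF i] .
    have "SS +>\<^bsub>PP\<^esub> (\<lambda>n. g n (xs i)) = SS +>\<^bsub>PP\<^esub> (\<lambda>n. h n (xs i))"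
    proof -
      have "f (xs i) = SS +>\<^bsub>PP\<^esub> (\<lambda>n. g n (xs i))" using g x unfolding islift_def by blast
      moreover have "f (xs i) = SS +>\<^bsub>PP\<^esub> (\<lambda>n. h n (xs i))" using h x unfolding islift_def by blast
      ultimately show ?thesis by simp
    qed
    from iffD1[OF cos_eq[OF lift_carrier[OF gh(1) x] lift_carrier[OF gh(2) x]] this] show ?thesis .
  qed
  have "{n. g n \<noteq> h n} \<subseteq> (\<Union>i<r. {n. g n (xs i) \<noteq> h n (xs i)})"
  proof
    fix n assume n: "n \<in> {n. g n \<noteq> h n}"
    show "n \<in> (\<Union>i<r. {n. g n (xs i) \<noteq> h n (xs i)})"
    proof (rule ccontr)
      assume "n \<notin> (\<Union>i<r. {n. g n (xs i) \<noteq> h n (xs i)})"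
      then have "\<And>i. i < r \<Longrightarrow> g n (xs i) = h n (xs i)" by simp
      then have "g n = h n" by (rule hom_ext[OF modQ gh(1) gh(2)])
      then show False using n by simp
    qed
  qed
  moreover have "finite (\<Union>i<r. {n. g n (xs i) \<noteq> h n (xs i)})"
    by (rule finite_UN_I) (simp_all add: fin)
  ultimately show ?thesis by (rule finite_subset)
qed

end


context setting begin

lemma lift_exists:
  assumes f: "f \<in> mod_hom A M PS"
  shows "\<exists>g. islift f g"
proof -
  interpret M: module A M by (rule modM)
  have cA: "\<zero>\<^bsub>A\<^esub> \<in> carrier A" "\<one>\<^bsub>A\<^esub> \<in> carrier A" "\<ominus>\<^bsub>A\<^esub> \<one>\<^bsub>A\<^esub> \<in> carrier A"
    by simp_all
  have "\<forall>i. \<exists>p. i < r \<longrightarrow> p \<in> carrier PP \<and> f (xs i) = SS +>\<^bsub>PP\<^esub> p"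
  proof
    fix i
    show "\<exists>p. i < r \<longrightarrow> p \<in> carrier PP \<and> f (xs i) = SS +>\<^bsub>PP\<^esub> p"
    proof (cases "i < r")
      case True
      have "f (xs i) \<in> carrier PS" using mod_homD(1)[OF f xs_carrier[OF True]] .
      then show ?thesis unfolding PS_carrier by blast
    qed simp
  qed
  then obtain pp where pp: "\<And>i. i < r \<Longrightarrow> pp i \<in> carrier PP \<and> f (xs i) = SS +>\<^bsub>PP\<^esub> pp i"
    by metis
  have ppP: "\<And>i. i < r \<Longrightarrow> pp i \<in> carrier PP" using pp by blast
  have ppn: "\<And>i n. i < r \<Longrightarrow> pp i n \<in> carrier (AQ n)" using ppP P_carrier by blast
  define vv where "vv a = (\<lambda>n. finsum (AQ n) (\<lambda>i. a i \<odot>\<^bsub>AQ n\<^esub> pp i n) {..<r})" for a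
  have vsum: "(\<lambda>i. a i \<odot>\<^bsub>AQ n\<^esub> pp i n) \<in> {..<r} \<rightarrow> carrier (AQ n)" if a: "a \<in> vecs A r" for a n
  proof
    fix i assume "i \<in> {..<r}"
    then show "a i \<odot>\<^bsub>AQ n\<^esub> pp i n \<in> carrier (AQ n)"
      using module.smult_closed[OF modQ vecs_carrier[OF a] ppn] by simp
  qed
  have vvc: "vv a n \<in> carrier (AQ n)" if a: "a \<in> vecs A r" for a n
    unfolding vv_def using abelian_monoid.finsum_closed[OF abelian_group.axioms(1)[OF agQ] vsum[OF a]] .
  have vvP: "vv a \<in> carrier PP" if a: "a \<in> vecs A r" for a
    unfolding P_carrier using vvc[OF a] by blast
  have flin: "f (lin a) = SS +>\<^bsub>PP\<^esub> vv a" if a: "a \<in> vecs A r" for a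
  proof -
    interpret PS: module A PS by (rule modPS)
    interpret P: module A PP by (rule modP)
    have yP: "(\<lambda>i. a i \<odot>\<^bsub>PP\<^esub> pp i) \<in> {..<r} \<rightarrow> carrier PP"
    proof
      fix i assume "i \<in> {..<r}"
      then show "a i \<odot>\<^bsub>PP\<^esub> pp i \<in> carrier PP" using P.smult_closed[OF vecs_carrier[OF a] ppP] by simp
    qed
    have "f (lin a) = finsum PS (\<lambda>i. a i \<odot>\<^bsub>PS\<^esub> f (xs i)) {..<r}"
      by (rule hom_lin[OF modPS f a])
    also have "\<dots> = finsum PS (\<lambda>i. SS +>\<^bsub>PP\<^esub> (a i \<odot>\<^bsub>PP\<^esub> pp i)) {..<r}"
    proof (rule PS.finsum_cong')
      fix i assume i: "i \<in> {..<r}"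
      then have ir: "i < r" by simp
      show "a i \<odot>\<^bsub>PS\<^esub> f (xs i) = SS +>\<^bsub>PP\<^esub> (a i \<odot>\<^bsub>PP\<^esub> pp i)"
        using pp[OF ir] PS_smult[OF vecs_carrier[OF a] ppP[OF ir]] by simp
    next
      show "(\<lambda>i. SS +>\<^bsub>PP\<^esub> (a i \<odot>\<^bsub>PP\<^esub> pp i)) \<in> {..<r} \<rightarrow> carrier PS"
      proof
        fix i assume "i \<in> {..<r}"
        then have "a i \<odot>\<^bsub>PP\<^esub> pp i \<in> carrier PP" using yP by blast
        then show "SS +>\<^bsub>PP\<^esub> (a i \<odot>\<^bsub>PP\<^esub> pp i) \<in> carrier PS" unfolding PS_carrier by blast
      qed
    qed simp
    also have "\<dots> = SS +>\<^bsub>PP\<^esub> finsum PP (\<lambda>i. a i \<odot>\<^bsub>PP\<^esub> pp i) {..<r}"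
      by (rule cos_finsum[symmetric, OF _ yP]) simp
    also have "finsum PP (\<lambda>i. a i \<odot>\<^bsub>PP\<^esub> pp i) {..<r} = vv a"
    proof
      fix n
      have "finsum PP (\<lambda>i. a i \<odot>\<^bsub>PP\<^esub> pp i) {..<r} n = finsum (AQ n) (\<lambda>i. (a i \<odot>\<^bsub>PP\<^esub> pp i) n) {..<r}"
        by (rule proj_finsum[OF _ yP]) simp
      also have "\<dots> = vv a n" unfolding vv_def by (simp add: prod_module_simps)
      finally show "finsum PP (\<lambda>i. a i \<odot>\<^bsub>PP\<^esub> pp i) {..<r} n = vv a n" .
    qed
    finally show ?thesis .
  qed
  have vv_add: "vv (vadd A a b) n = vv a n \<oplus>\<^bsub>AQ n\<^esub> vv b n" if a: "a \<in> vecs A r" and b: "b \<in> vecs A r" for a b n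
  proof -
    interpret Q: module A "AQ n" by (rule modQ)
    have "vv (vadd A a b) n = finsum (AQ n) (\<lambda>i. a i \<odot>\<^bsub>AQ n\<^esub> pp i n \<oplus>\<^bsub>AQ n\<^esub> b i \<odot>\<^bsub>AQ n\<^esub> pp i n) {..<r}"
      unfolding vv_def vadd_def
    proof (rule Q.finsum_cong')
      fix i assume "i \<in> {..<r}"
      then show "(a i \<oplus>\<^bsub>A\<^esub> b i) \<odot>\<^bsub>AQ n\<^esub> pp i n = a i \<odot>\<^bsub>AQ n\<^esub> pp i n \<oplus>\<^bsub>AQ n\<^esub> b i \<odot>\<^bsub>AQ n\<^esub> pp i n"
        using Q.smult_l_distr[OF vecs_carrier[OF a] vecs_carrier[OF b] ppn] by simp
    next
      show "(\<lambda>i. a i \<odot>\<^bsub>AQ n\<^esub> pp i n \<oplus>\<^bsub>AQ n\<^esub> b i \<odot>\<^bsub>AQ n\<^esub> pp i n) \<in> {..<r} \<rightarrow> carrier (AQ n)"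
        using vsum[OF a] vsum[OF b] by (simp add: Pi_iff)
    qed simp
    also have "\<dots> = vv a n \<oplus>\<^bsub>AQ n\<^esub> vv b n"
      unfolding vv_def by (rule Q.finsum_addf[OF vsum[OF a] vsum[OF b]])
    finally show ?thesis .
  qed
  have vv_sm: "vv (vsmult A c a) n = c \<odot>\<^bsub>AQ n\<^esub> vv a n" if c: "c \<in> carrier A" and a: "a \<in> vecs A r" for c a n
  proof -
    interpret Q: module A "AQ n" by (rule modQ)
    have "vv (vsmult A c a) n = finsum (AQ n) (\<lambda>i. c \<odot>\<^bsub>AQ n\<^esub> (a i \<odot>\<^bsub>AQ n\<^esub> pp i n)) {..<r}"
      unfolding vv_def vsmult_def
    proof (rule Q.finsum_cong')
      fix i assume "i \<in> {..<r}"
      then show "(c \<otimes>\<^bsub>A\<^esub> a i) \<odot>\<^bsub>AQ n\<^esub> pp i n = c \<odot>\<^bsub>AQ n\<^esub> (a i \<odot>\<^bsub>AQ n\<^esub> pp i n)"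
        using Q.smult_assoc1[OF c vecs_carrier[OF a] ppn] by simp
    next
      show "(\<lambda>i. c \<odot>\<^bsub>AQ n\<^esub> (a i \<odot>\<^bsub>AQ n\<^esub> pp i n)) \<in> {..<r} \<rightarrow> carrier (AQ n)"
        using vsum[OF a] Q.smult_closed[OF c] by (simp add: Pi_iff)
    qed simp
    also have "\<dots> = c \<odot>\<^bsub>AQ n\<^esub> vv a n"
      unfolding vv_def by (rule Q.finsum_smult_ldistr[symmetric, OF _ c vsum[OF a]]) simp
    finally show ?thesis .
  qed
  define K where "K = {a \<in> vecs A r. lin a = \<zero>\<^bsub>M\<^esub>}"
  define B where "B a = {n. vv a n \<noteq> \<zero>\<^bsub>AQ n\<^esub>}" for a
  have KB: "finite (\<Union>a\<in>K. B a)"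
  proof (rule noeth_vec[OF noer cr])
    show "K \<subseteq> vecs A r" unfolding K_def by blast
    show "(\<lambda>i. \<zero>\<^bsub>A\<^esub>) \<in> K" unfolding K_def using zero_vecs lin_zero by simp
  next
    fix a b assume a: "a \<in> K" and b: "b \<in> K"
    have av: "a \<in> vecs A r" and la: "lin a = \<zero>\<^bsub>M\<^esub>" using a unfolding K_def by simp_all
    have bv: "b \<in> vecs A r" and lb: "lin b = \<zero>\<^bsub>M\<^esub>" using b unfolding K_def by simp_all
    show "vadd A a b \<in> K" unfolding K_def using vadd_vecs[OF av bv] lin_vadd[OF av bv] la lb by simp
    show "B (vadd A a b) \<subseteq> B a \<union> B b"
    proof
      fix n assume n: "n \<in> B (vadd A a b)"
      show "n \<in> B a \<union> B b"
      proof (rule ccontr)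
        assume "n \<notin> B a \<union> B b"
        then have "vv a n = \<zero>\<^bsub>AQ n\<^esub>" "vv b n = \<zero>\<^bsub>AQ n\<^esub>" unfolding B_def by simp_all
        then have "vv (vadd A a b) n = \<zero>\<^bsub>AQ n\<^esub>" using vv_add[OF av bv, of n]
          abelian_monoid.l_zero[OF abelian_group.axioms(1)[OF agQ] abelian_monoid.zero_closed[OF abelian_group.axioms(1)[OF agQ]]]
          by simp
        then show False using n unfolding B_def by simp
      qed
    qed
  next
    fix c a assume c: "c \<in> carrier A" and a: "a \<in> K"
    have av: "a \<in> vecs A r" and la: "lin a = \<zero>\<^bsub>M\<^esub>" using a unfolding K_def by simp_all
    show "vsmult A c a \<in> K" unfolding K_def using vsmult_vecs[OF c av] lin_vsmult[OF c av] la M.smult_r_null[OF c] by simp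
    show "B (vsmult A c a) \<subseteq> B a"
    proof
      fix n assume n: "n \<in> B (vsmult A c a)"
      show "n \<in> B a"
      proof (rule ccontr)
        assume "n \<notin> B a"
        then have "vv a n = \<zero>\<^bsub>AQ n\<^esub>" unfolding B_def by simp
        then have "vv (vsmult A c a) n = \<zero>\<^bsub>AQ n\<^esub>" using vv_sm[OF c av, of n] module.smult_r_null[OF modQ c] by simp
        then show False using n unfolding B_def by simp
      qed
    qed
  next
    fix a assume a: "a \<in> K"
    have av: "a \<in> vecs A r" and la: "lin a = \<zero>\<^bsub>M\<^esub>" using a unfolding K_def by simp_all
    have "SS +>\<^bsub>PP\<^esub> vv a = f \<zero>\<^bsub>M\<^esub>" using flin[OF av] la by simp
    also have "\<dots> = SS" using hom_zero[OF modPS f] PS_zero by simp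
    finally have "vv a \<in> SS" by (rule cos_in[OF vvP[OF av]])
    then show "finite (B a)" unfolding dsum_set_def B_def by simp
  qed
  define D where "D = (\<Union>a\<in>K. B a)"
  have key: "vv a n = vv b n" if n: "n \<notin> D" and a: "a \<in> vecs A r" and b: "b \<in> vecs A r"
     and e: "lin a = lin b" for n a b
  proof -
    interpret Q: module A "AQ n" by (rule modQ)
    define c where "c = vadd A a (vsmult A (\<ominus>\<^bsub>A\<^esub> \<one>\<^bsub>A\<^esub>) b)"
    have bv': "vsmult A (\<ominus>\<^bsub>A\<^esub> \<one>\<^bsub>A\<^esub>) b \<in> vecs A r" using vsmult_vecs[OF cA(3) b] .
    have cv: "c \<in> vecs A r" unfolding c_def using vadd_vecs[OF a bv'] .
    have lb: "lin b \<in> carrier M" using lin_closed[OF b] .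
    have "lin c = lin a \<oplus>\<^bsub>M\<^esub> (\<ominus>\<^bsub>A\<^esub> \<one>\<^bsub>A\<^esub>) \<odot>\<^bsub>M\<^esub> lin b"
      unfolding c_def using lin_vadd[OF a bv'] lin_vsmult[OF cA(3) b] by simp
    also have "\<dots> = lin b \<oplus>\<^bsub>M\<^esub> \<ominus>\<^bsub>M\<^esub> lin b"
      using e M.smult_l_minus[OF cA(2) lb] M.smult_one[OF lb] by simp
    also have "\<dots> = \<zero>\<^bsub>M\<^esub>" using ag_diff_zero[OF agM lb lb] by simp
    finally have "c \<in> K" unfolding K_def using cv by simp
    then have "n \<notin> B c" using n unfolding D_def by blast
    then have z: "vv c n = \<zero>\<^bsub>AQ n\<^esub>" unfolding B_def by simp
    have vb: "vv b n \<in> carrier (AQ n)" using vvc[OF b] .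
    have "vv c n = vv a n \<oplus>\<^bsub>AQ n\<^esub> (\<ominus>\<^bsub>A\<^esub> \<one>\<^bsub>A\<^esub>) \<odot>\<^bsub>AQ n\<^esub> vv b n"
      unfolding c_def using vv_add[OF a bv'] vv_sm[OF cA(3) b] by simp
    also have "\<dots> = vv a n \<oplus>\<^bsub>AQ n\<^esub> \<ominus>\<^bsub>AQ n\<^esub> vv b n"
      using Q.smult_l_minus[OF cA(2) vb] Q.smult_one[OF vb] by simp
    finally show ?thesis using z ag_diff_zero[OF agQ vvc[OF a] vb] by simp
  qed
  define rep where "rep x = (SOME a. a \<in> vecs A r \<and> lin a = x)" for x
  have rep: "rep x \<in> vecs A r \<and> lin (rep x) = x" if x: "x \<in> carrier M" for x
  proof -
    have "\<exists>a. a \<in> vecs A r \<and> lin a = x" using span[OF x] by blast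
    then show ?thesis unfolding rep_def by (rule someI_ex)
  qed
  define g where "g n = (if n \<in> D then (\<lambda>x\<in>carrier M. \<zero>\<^bsub>AQ n\<^esub>) else (\<lambda>x\<in>carrier M. vv (rep x) n))" for n
  have glin: "g n (lin a) = vv a n" if n: "n \<notin> D" and a: "a \<in> vecs A r" for n a
  proof -
    have la: "lin a \<in> carrier M" using lin_closed[OF a] .
    have "g n (lin a) = vv (rep (lin a)) n" unfolding g_def using n la by simp
    also have "\<dots> = vv a n" using key[OF n _ a] rep[OF la] by blast
    finally show ?thesis .
  qed
  have ghom: "g n \<in> mod_hom A M (AQ n)" for n
  proof (cases "n \<in> D")
    case True
    interpret Q: module A "AQ n" by (rule modQ)
    have gz: "g n = (\<lambda>x\<in>carrier M. \<zero>\<^bsub>AQ n\<^esub>)" unfolding g_def using True by simp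
    show ?thesis unfolding gz
    proof (rule mod_homI)
      fix x assume "x \<in> carrier M" then show "(\<lambda>x\<in>carrier M. \<zero>\<^bsub>AQ n\<^esub>) x \<in> carrier (AQ n)" by simp
    next
      fix x y assume "x \<in> carrier M" "y \<in> carrier M"
      then show "(\<lambda>x\<in>carrier M. \<zero>\<^bsub>AQ n\<^esub>) (x \<oplus>\<^bsub>M\<^esub> y) = (\<lambda>x\<in>carrier M. \<zero>\<^bsub>AQ n\<^esub>) x \<oplus>\<^bsub>AQ n\<^esub> (\<lambda>x\<in>carrier M. \<zero>\<^bsub>AQ n\<^esub>) y"
        by simp
    next
      fix c x assume "c \<in> carrier A" "x \<in> carrier M"
      then show "(\<lambda>x\<in>carrier M. \<zero>\<^bsub>AQ n\<^esub>) (c \<odot>\<^bsub>M\<^esub> x) = c \<odot>\<^bsub>AQ n\<^esub> (\<lambda>x\<in>carrier M. \<zero>\<^bsub>AQ n\<^esub>) x"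
        by simp
    qed (rule restrict_extensional)
  next
    case False
    show ?thesis
    proof (rule mod_homI)
      fix x assume x: "x \<in> carrier M"
      then obtain a where a: "a \<in> vecs A r" "lin a = x" using span by blast
      show "g n x \<in> carrier (AQ n)" using glin[OF False a(1)] a(2) vvc[OF a(1)] by simp
    next
      show "g n \<in> extensional (carrier M)" unfolding g_def using False by simp
    next
      fix x y assume x: "x \<in> carrier M" and y: "y \<in> carrier M"
      obtain a where a: "a \<in> vecs A r" "lin a = x" using span[OF x] by blast
      obtain b where b: "b \<in> vecs A r" "lin b = y" using span[OF y] by blast
      have "x \<oplus>\<^bsub>M\<^esub> y = lin (vadd A a b)" using lin_vadd[OF a(1) b(1)] a(2) b(2) by simp
      then show "g n (x \<oplus>\<^bsub>M\<^esub> y) = g n x \<oplus>\<^bsub>AQ n\<^esub> g n y"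
        using glin[OF False vadd_vecs[OF a(1) b(1)]] glin[OF False a(1)] glin[OF False b(1)]
          vv_add[OF a(1) b(1)] a(2) b(2) by simp
    next
      fix c x assume c: "c \<in> carrier A" and x: "x \<in> carrier M"
      obtain a where a: "a \<in> vecs A r" "lin a = x" using span[OF x] by blast
      have "c \<odot>\<^bsub>M\<^esub> x = lin (vsmult A c a)" using lin_vsmult[OF c a(1)] a(2) by simp
      then show "g n (c \<odot>\<^bsub>M\<^esub> x) = c \<odot>\<^bsub>AQ n\<^esub> g n x"
        using glin[OF False vsmult_vecs[OF c a(1)]] glin[OF False a(1)] vv_sm[OF c a(1)] a(2) by simp
    qed
  qed
  have "islift f g"
    unfolding islift_def
  proof (intro conjI allI ballI)
    fix n show "g n \<in> mod_hom A M (AQ n)" by (rule ghom)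
  next
    fix x assume x: "x \<in> carrier M"
    obtain a where a: "a \<in> vecs A r" "lin a = x" using span[OF x] by blast
    have "{n. vv a n \<noteq> g n x} \<subseteq> D"
    proof
      fix n assume n: "n \<in> {n. vv a n \<noteq> g n x}"
      show "n \<in> D"
      proof (rule ccontr)
        assume "n \<notin> D"
        then have "g n x = vv a n" using glin[OF _ a(1)] a(2) by blast
        then show False using n by simp
      qed
    qed
    then have fin: "finite {n. vv a n \<noteq> g n x}" using KB unfolding D_def by (rule finite_subset)
    have "f x = SS +>\<^bsub>PP\<^esub> vv a" using flin[OF a(1)] a(2) by simp
    also have "\<dots> = SS +>\<^bsub>PP\<^esub> (\<lambda>n. g n x)"
      using iffD2[OF cos_eq[OF vvP[OF a(1)] lift_carrier[OF ghom x]]] fin by simp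
    finally show "f x = SS +>\<^bsub>PP\<^esub> (\<lambda>n. g n x)" .
  qed
  then show ?thesis by blast
qed

end


lemma Hom_module_simps:
  "carrier (Hom_module A M N) = mod_hom A M N"
  "f \<oplus>\<^bsub>Hom_module A M N\<^esub> g = (\<lambda>x\<in>carrier M. f x \<oplus>\<^bsub>N\<^esub> g x)"
  "c \<odot>\<^bsub>Hom_module A M N\<^esub> f = (\<lambda>x\<in>carrier M. c \<odot>\<^bsub>N\<^esub> f x)"
  by (simp_all add: Hom_module_def)

context setting begin

lemma main_iso:
  assumes iso: "\<And>n. mod_isomorphic A (Hom_module A M (AQ n)) (AQ n)"
  shows "mod_isomorphic A (Hom_module A M PS) PS"
proof -
  have "\<forall>n. \<exists>h. h \<in> mod_hom A (Hom_module A M (AQ n)) (AQ n) \<and> bij_betw h (mod_hom A M (AQ n)) (carrier (AQ n))"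
    using iso unfolding mod_isomorphic_def Hom_module_simps by blast
  then obtain phi where phi: "\<And>n. phi n \<in> mod_hom A (Hom_module A M (AQ n)) (AQ n)"
    and phib: "\<And>n. bij_betw (phi n) (mod_hom A M (AQ n)) (carrier (AQ n))" by metis
  have phic: "phi n h \<in> carrier (AQ n)" if "h \<in> mod_hom A M (AQ n)" for n h
    using mod_homD(1)[OF phi[of n]] that unfolding Hom_module_simps by blast
  have phiadd: "phi n (\<lambda>x\<in>carrier M. h x \<oplus>\<^bsub>AQ n\<^esub> h' x) = phi n h \<oplus>\<^bsub>AQ n\<^esub> phi n h'"
    if "h \<in> mod_hom A M (AQ n)" "h' \<in> mod_hom A M (AQ n)" for n h h'
    using mod_homD(3)[OF phi[of n], of h h'] that unfolding Hom_module_simps by simp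
  have phism: "phi n (\<lambda>x\<in>carrier M. c \<odot>\<^bsub>AQ n\<^esub> h x) = c \<odot>\<^bsub>AQ n\<^esub> phi n h"
    if "c \<in> carrier A" "h \<in> mod_hom A M (AQ n)" for n h c
    using mod_homD(4)[OF phi[of n], of c h] that unfolding Hom_module_simps by simp
  have phiinj: "\<And>n. inj_on (phi n) (mod_hom A M (AQ n))" using bij_betw_imp_inj_on[OF phib] .
  have phiimg: "\<And>n. phi n ` mod_hom A M (AQ n) = carrier (AQ n)" using bij_betw_imp_surj_on[OF phib] .
  define lift where "lift f = (SOME g. islift f g)" for f
  have lift: "islift f (lift f)" if "f \<in> mod_hom A M PS" for f
    unfolding lift_def using lift_exists[OF that] by (rule someI_ex)
  have liftH: "\<And>n. g n \<in> mod_hom A M (AQ n)" if "islift f g" for f g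
    using that unfolding islift_def by blast
  have liftE: "\<And>x. x \<in> carrier M \<Longrightarrow> f x = SS +>\<^bsub>PP\<^esub> (\<lambda>n. g n x)" if "islift f g" for f g
    using that unfolding islift_def by blast
  have phiP: "(\<lambda>n. phi n (g n)) \<in> carrier PP" if "\<And>n. g n \<in> mod_hom A M (AQ n)" for g
    unfolding P_carrier using phic that by blast
  define Psi where "Psi = (\<lambda>f\<in>mod_hom A M PS. SS +>\<^bsub>PP\<^esub> (\<lambda>n. phi n (lift f n)))"
  have Psi_any: "Psi f = SS +>\<^bsub>PP\<^esub> (\<lambda>n. phi n (g n))" if f: "f \<in> mod_hom A M PS" and g: "islift f g" for f g
  proof -
    have "finite {n. lift f n \<noteq> g n}" using lift_unique[OF lift[OF f] g] .
    moreover have "{n. phi n (lift f n) \<noteq> phi n (g n)} \<subseteq> {n. lift f n \<noteq> g n}"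
    proof (rule subsetI)
      fix n assume "n \<in> {n. phi n (lift f n) \<noteq> phi n (g n)}"
      then have "phi n (lift f n) \<noteq> phi n (g n)" by simp
      then have "lift f n \<noteq> g n" by metis
      then show "n \<in> {n. lift f n \<noteq> g n}" by simp
    qed
    ultimately have fin: "finite {n. phi n (lift f n) \<noteq> phi n (g n)}" by (rule finite_subset[rotated])
    have "Psi f = SS +>\<^bsub>PP\<^esub> (\<lambda>n. phi n (lift f n))" unfolding Psi_def using f by simp
    also have "\<dots> = SS +>\<^bsub>PP\<^esub> (\<lambda>n. phi n (g n))"
      using iffD2[OF cos_eq[OF phiP[OF liftH[OF lift[OF f]]] phiP[OF liftH[OF g]]] fin] .
    finally show ?thesis .
  qed
  have PsiC: "Psi f \<in> carrier PS" if f: "f \<in> mod_hom A M PS" for f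
  proof -
    have "Psi f = SS +>\<^bsub>PP\<^esub> (\<lambda>n. phi n (lift f n))" unfolding Psi_def using f by simp
    then show ?thesis unfolding PS_carrier using phiP[OF liftH[OF lift[OF f]]] by blast
  qed
  have Psi_hom: "Psi \<in> mod_hom A (Hom_module A M PS) PS"
  proof (rule mod_homI)
    fix f assume "f \<in> carrier (Hom_module A M PS)"
    then show "Psi f \<in> carrier PS" using PsiC unfolding Hom_module_simps by blast
  next
    show "Psi \<in> extensional (carrier (Hom_module A M PS))" unfolding Psi_def Hom_module_simps
      by (rule restrict_extensional)
  next
    fix f f' assume f0: "f \<in> carrier (Hom_module A M PS)" and f0': "f' \<in> carrier (Hom_module A M PS)"
    have f: "f \<in> mod_hom A M PS" and f': "f' \<in> mod_hom A M PS" using f0 f0' unfolding Hom_module_simps .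
    define g where "g = lift f"
    define g' where "g' = lift f'"
    have gl: "islift f g" and gl': "islift f' g'" unfolding g_def g'_def using lift f f' by blast+
    have gH: "\<And>n. g n \<in> mod_hom A M (AQ n)" and gH': "\<And>n. g' n \<in> mod_hom A M (AQ n)"
      using liftH[OF gl] liftH[OF gl'] .
    define F where "F = (\<lambda>x\<in>carrier M. f x \<oplus>\<^bsub>PS\<^esub> f' x)"
    define G where "G = (\<lambda>n. (\<lambda>x\<in>carrier M. g n x \<oplus>\<^bsub>AQ n\<^esub> g' n x))"
    have FH: "F \<in> mod_hom A M PS" unfolding F_def by (rule hom_add_closed[OF modM modPS f f'])
    have GH: "\<And>n. G n \<in> mod_hom A M (AQ n)" unfolding G_def by (rule hom_add_closed[OF modM modQ gH gH'])
    have GL: "islift F G"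
      unfolding islift_def
    proof (intro conjI allI ballI)
      fix n show "G n \<in> mod_hom A M (AQ n)" by (rule GH)
    next
      fix x assume x: "x \<in> carrier M"
      have "F x = (SS +>\<^bsub>PP\<^esub> (\<lambda>n. g n x)) \<oplus>\<^bsub>PS\<^esub> (SS +>\<^bsub>PP\<^esub> (\<lambda>n. g' n x))"
        unfolding F_def using x liftE[OF gl x] liftE[OF gl' x] by simp
      also have "\<dots> = SS +>\<^bsub>PP\<^esub> ((\<lambda>n. g n x) \<oplus>\<^bsub>PP\<^esub> (\<lambda>n. g' n x))"
        by (rule PS_add[OF lift_carrier[OF gH x] lift_carrier[OF gH' x]])
      also have "(\<lambda>n. g n x) \<oplus>\<^bsub>PP\<^esub> (\<lambda>n. g' n x) = (\<lambda>n. G n x)"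
        unfolding G_def using x by (simp add: prod_module_simps)
      finally show "F x = SS +>\<^bsub>PP\<^esub> (\<lambda>n. G n x)" .
    qed
    have "Psi (f \<oplus>\<^bsub>Hom_module A M PS\<^esub> f') = Psi F" unfolding F_def Hom_module_simps ..
    also have "\<dots> = SS +>\<^bsub>PP\<^esub> (\<lambda>n. phi n (G n))" by (rule Psi_any[OF FH GL])
    also have "(\<lambda>n. phi n (G n)) = (\<lambda>n. phi n (g n)) \<oplus>\<^bsub>PP\<^esub> (\<lambda>n. phi n (g' n))"
      unfolding G_def using phiadd[OF gH gH'] by (simp add: prod_module_simps)
    also have "SS +>\<^bsub>PP\<^esub> ((\<lambda>n. phi n (g n)) \<oplus>\<^bsub>PP\<^esub> (\<lambda>n. phi n (g' n))) =
        (SS +>\<^bsub>PP\<^esub> (\<lambda>n. phi n (g n))) \<oplus>\<^bsub>PS\<^esub> (SS +>\<^bsub>PP\<^esub> (\<lambda>n. phi n (g' n)))"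
      by (rule PS_add[symmetric, OF phiP[OF gH] phiP[OF gH']])
    also have "\<dots> = Psi f \<oplus>\<^bsub>PS\<^esub> Psi f'" using Psi_any[OF f gl] Psi_any[OF f' gl'] by simp
    finally show "Psi (f \<oplus>\<^bsub>Hom_module A M PS\<^esub> f') = Psi f \<oplus>\<^bsub>PS\<^esub> Psi f'" .
  next
    fix c f assume c: "c \<in> carrier A" and f0: "f \<in> carrier (Hom_module A M PS)"
    have f: "f \<in> mod_hom A M PS" using f0 unfolding Hom_module_simps .
    define g where "g = lift f"
    have gl: "islift f g" unfolding g_def using lift f by blast
    have gH: "\<And>n. g n \<in> mod_hom A M (AQ n)" using liftH[OF gl] .
    define F where "F = (\<lambda>x\<in>carrier M. c \<odot>\<^bsub>PS\<^esub> f x)"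
    define G where "G = (\<lambda>n. (\<lambda>x\<in>carrier M. c \<odot>\<^bsub>AQ n\<^esub> g n x))"
    have FH: "F \<in> mod_hom A M PS" unfolding F_def by (rule hom_smult_closed[OF modM modPS f c])
    have GH: "\<And>n. G n \<in> mod_hom A M (AQ n)" unfolding G_def by (rule hom_smult_closed[OF modM modQ gH c])
    have GL: "islift F G"
      unfolding islift_def
    proof (intro conjI allI ballI)
      fix n show "G n \<in> mod_hom A M (AQ n)" by (rule GH)
    next
      fix x assume x: "x \<in> carrier M"
      have "F x = c \<odot>\<^bsub>PS\<^esub> (SS +>\<^bsub>PP\<^esub> (\<lambda>n. g n x))"
        unfolding F_def using x liftE[OF gl x] by simp
      also have "\<dots> = SS +>\<^bsub>PP\<^esub> (c \<odot>\<^bsub>PP\<^esub> (\<lambda>n. g n x))"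
        by (rule PS_smult[OF c lift_carrier[OF gH x]])
      also have "c \<odot>\<^bsub>PP\<^esub> (\<lambda>n. g n x) = (\<lambda>n. G n x)"
        unfolding G_def using x by (simp add: prod_module_simps)
      finally show "F x = SS +>\<^bsub>PP\<^esub> (\<lambda>n. G n x)" .
    qed
    have "Psi (c \<odot>\<^bsub>Hom_module A M PS\<^esub> f) = Psi F" unfolding F_def Hom_module_simps ..
    also have "\<dots> = SS +>\<^bsub>PP\<^esub> (\<lambda>n. phi n (G n))" by (rule Psi_any[OF FH GL])
    also have "(\<lambda>n. phi n (G n)) = c \<odot>\<^bsub>PP\<^esub> (\<lambda>n. phi n (g n))"
      unfolding G_def using phism[OF c gH] by (simp add: prod_module_simps)
    also have "SS +>\<^bsub>PP\<^esub> (c \<odot>\<^bsub>PP\<^esub> (\<lambda>n. phi n (g n))) = c \<odot>\<^bsub>PS\<^esub> (SS +>\<^bsub>PP\<^esub> (\<lambda>n. phi n (g n)))"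
      by (rule PS_smult[symmetric, OF c phiP[OF gH]])
    also have "\<dots> = c \<odot>\<^bsub>PS\<^esub> Psi f" using Psi_any[OF f gl] by simp
    finally show "Psi (c \<odot>\<^bsub>Hom_module A M PS\<^esub> f) = c \<odot>\<^bsub>PS\<^esub> Psi f" .
  qed
  have Psi_inj: "inj_on Psi (mod_hom A M PS)"
  proof (rule inj_onI)
    fix f f' assume f: "f \<in> mod_hom A M PS" and f': "f' \<in> mod_hom A M PS" and e: "Psi f = Psi f'"
    define g where "g = lift f"
    define g' where "g' = lift f'"
    have gl: "islift f g" and gl': "islift f' g'" unfolding g_def g'_def using lift f f' by blast+
    have gH: "\<And>n. g n \<in> mod_hom A M (AQ n)" and gH': "\<And>n. g' n \<in> mod_hom A M (AQ n)"
      using liftH[OF gl] liftH[OF gl'] .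
    have "SS +>\<^bsub>PP\<^esub> (\<lambda>n. phi n (g n)) = SS +>\<^bsub>PP\<^esub> (\<lambda>n. phi n (g' n))"
      using e Psi_any[OF f gl] Psi_any[OF f' gl'] by simp
    then have fin: "finite {n. phi n (g n) \<noteq> phi n (g' n)}"
      using iffD1[OF cos_eq[OF phiP[OF gH] phiP[OF gH']]] by blast
    have "{n. g n \<noteq> g' n} \<subseteq> {n. phi n (g n) \<noteq> phi n (g' n)}"
    proof (rule subsetI)
      fix n assume "n \<in> {n. g n \<noteq> g' n}"
      then have "g n \<noteq> g' n" by simp
      then have "phi n (g n) \<noteq> phi n (g' n)" using inj_onD[OF phiinj _ gH gH'] by blast
      then show "n \<in> {n. phi n (g n) \<noteq> phi n (g' n)}" by simp
    qed
    then have fin2: "finite {n. g n \<noteq> g' n}" using fin by (rule finite_subset)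
    show "f = f'"
    proof
      fix x
      show "f x = f' x"
      proof (cases "x \<in> carrier M")
        case True
        have "{n. g n x \<noteq> g' n x} \<subseteq> {n. g n \<noteq> g' n}" by (rule subsetI) auto
        then have "finite {n. g n x \<noteq> g' n x}" using fin2 by (rule finite_subset)
        then have "SS +>\<^bsub>PP\<^esub> (\<lambda>n. g n x) = SS +>\<^bsub>PP\<^esub> (\<lambda>n. g' n x)"
          using iffD2[OF cos_eq[OF lift_carrier[OF gH True] lift_carrier[OF gH' True]]] by blast
        then show ?thesis using liftE[OF gl True] liftE[OF gl' True] by simp
      next
        case False
        then show ?thesis using mod_homD(2)[OF f] mod_homD(2)[OF f'] by (simp add: extensional_def)
      qed
    qed
  qed
  have Psi_surj: "Psi ` mod_hom A M PS = carrier PS"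
  proof
    show "Psi ` mod_hom A M PS \<subseteq> carrier PS" using PsiC by blast
  next
    show "carrier PS \<subseteq> Psi ` mod_hom A M PS"
    proof
      fix Y assume "Y \<in> carrier PS"
      then obtain p where p: "p \<in> carrier PP" "Y = SS +>\<^bsub>PP\<^esub> p" unfolding PS_carrier by blast
      have pn: "\<And>n. p n \<in> carrier (AQ n)" using p(1) P_carrier by blast
      define g where "g n = inv_into (mod_hom A M (AQ n)) (phi n) (p n)" for n
      have gH: "g n \<in> mod_hom A M (AQ n)" for n
        unfolding g_def using inv_into_into[of "p n" "phi n" "mod_hom A M (AQ n)"] pn[of n] phiimg[of n] by simp
      have gp: "phi n (g n) = p n" for n
        unfolding g_def using f_inv_into_f[of "p n" "phi n" "mod_hom A M (AQ n)"] pn[of n] phiimg[of n] by simp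
      define F where "F = (\<lambda>x\<in>carrier M. SS +>\<^bsub>PP\<^esub> (\<lambda>n. g n x))"
      have FH: "F \<in> mod_hom A M PS"
      proof (rule mod_homI)
        fix x assume x: "x \<in> carrier M"
        show "F x \<in> carrier PS" unfolding F_def PS_carrier using x lift_carrier[OF gH x] by auto
      next
        show "F \<in> extensional (carrier M)" unfolding F_def by (rule restrict_extensional)
      next
        fix x y assume x: "x \<in> carrier M" and y: "y \<in> carrier M"
        have xy: "x \<oplus>\<^bsub>M\<^esub> y \<in> carrier M"
          using abelian_monoid.a_closed[OF abelian_group.axioms(1)[OF agM] x y] .
        have "(\<lambda>n. g n (x \<oplus>\<^bsub>M\<^esub> y)) = (\<lambda>n. g n x) \<oplus>\<^bsub>PP\<^esub> (\<lambda>n. g n y)"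
          using mod_homD(3)[OF gH x y] by (simp add: prod_module_simps)
        then show "F (x \<oplus>\<^bsub>M\<^esub> y) = F x \<oplus>\<^bsub>PS\<^esub> F y"
          unfolding F_def using x y xy PS_add[OF lift_carrier[OF gH x] lift_carrier[OF gH y]] by simp
      next
        fix c x assume c: "c \<in> carrier A" and x: "x \<in> carrier M"
        have cx: "c \<odot>\<^bsub>M\<^esub> x \<in> carrier M" using module.smult_closed[OF modM c x] .
        have "(\<lambda>n. g n (c \<odot>\<^bsub>M\<^esub> x)) = c \<odot>\<^bsub>PP\<^esub> (\<lambda>n. g n x)"
          using mod_homD(4)[OF gH c x] by (simp add: prod_module_simps)
        then show "F (c \<odot>\<^bsub>M\<^esub> x) = c \<odot>\<^bsub>PS\<^esub> F x"
          unfolding F_def using x cx PS_smult[OF c lift_carrier[OF gH x]] by simp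
      qed
      have GL: "islift F g" unfolding islift_def F_def using gH by simp
      have "Psi F = SS +>\<^bsub>PP\<^esub> (\<lambda>n. phi n (g n))" by (rule Psi_any[OF FH GL])
      also have "\<dots> = Y" using gp p(2) by simp
      finally show "Y \<in> Psi ` mod_hom A M PS" using FH by (metis image_eqI)
    qed
  qed
  have "bij_betw Psi (carrier (Hom_module A M PS)) (carrier PS)"
    unfolding Hom_module_simps bij_betw_def using Psi_inj Psi_surj by blast
  then show ?thesis unfolding mod_isomorphic_def using Psi_hom by blast
qed

end


theorem proposition2p7:
  fixes A :: "('a, 'c) ring_scheme" and m :: "'a set"
    and I :: "nat \<Rightarrow> 'a set" and M :: "('a, 'm) module"
  assumes "noetherian_domain A"
    and "local_ring_with A m"
    and "normal_domain A"
    and "\<And>n. primeideal (I n) A"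
    and "\<And>n. I n \<noteq> {\<zero>\<^bsub>A\<^esub>}"
    and "\<forall>i\<ge>1. \<exists>n\<^sub>i. \<forall>n\<ge>n\<^sub>i. I n \<subseteq> ideal_pow A m i"
    and "module A M"
    and "fin_gen_module A M"
    and "\<And>n. mod_isomorphic A (Hom_module A M (quot_module A (self_module A) (I n)))
                                (quot_module A (self_module A) (I n))"
  shows "mod_isomorphic A
           (Hom_module A M (quot_module A
              (prod_module A (\<lambda>n. quot_module A (self_module A) (I n)))
              (dsum_set (\<lambda>n. quot_module A (self_module A) (I n)))))
           (quot_module A
              (prod_module A (\<lambda>n. quot_module A (self_module A) (I n)))
              (dsum_set (\<lambda>n. quot_module A (self_module A) (I n))))"
proof -
  have idl: "\<And>n. ideal (I n) A" using assms(4) primeideal.axioms(1) by blast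
  obtain G where G: "finite G" "G \<subseteq> carrier M" "carrier M = \<Inter>{H. submodule H A M \<and> G \<subseteq> H}"
    using assms(8) unfolding fin_gen_module_def by blast
  obtain r and xs :: "nat \<Rightarrow> 'm" where xs: "G = xs ` {i. i < r}"
    using finite_imp_nat_seg_image_inj_on[OF G(1)] by blast
  have xs': "G = xs ` {..<r}" using xs by (simp add: lessThan_def)
  have x1: "xs ` {..<r} \<subseteq> carrier M" using G(2) xs' by simp
  have x2: "carrier M = \<Inter>{H. submodule H A M \<and> xs ` {..<r} \<subseteq> H}" using G(3) xs' by simp
  interpret setting A I M xs r by (rule setting.intro[OF assms(1) idl assms(7) x1 x2])
  show ?thesis by (rule main_iso[OF assms(9)])
qed


end
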